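(* Let $(\Omega,\mathcal{H},\mathbb{E})$ be a sub-linear expectation space satisfying condition (CC) with family $\mathcal{P}$, let $\mathbb{V}$ be a sub-additive capacity on $\mathcal{F}$ such that $\mathbb{E}[f]\le\mathbb{V}(A)\le\mathbb{E}[g]$ whenever $f\le I_A\le g$, $f,g\in\mathcal{H}$, $A\in\mathcal{F}$, and let $\mathcal{V}(A)=1-\mathbb{V}(A^c)$. (i) If $\{X_n;n\ge1\}$ is a sequence of independent random variables with $\sum_{n=1}^\infty\mathcal{V}(X_n<1)<\infty$, then there exists $P\in\mathcal{P}$ with $P(X_i<1\ \text{i.o.})=0$. (ii) If $\{\mathbf{X}_n;n\ge1\}$ is a sequence of independent random vectors, $\mathbf{X}_n$ being $d_n$-dimensional, and $f_{n,j}:\mathbb{R}^{d_n}\to\mathbb{R}$ are locally Lipschitz functions of polynomial growth (i.e. $|f(x)-f(y)|\le C(1+|x|^k+|y|^k)|x-y|$) with $\sum_{n=1}^\infty\mathbb{V}(f_{n,j}(\mathbf{X}_n)\ge1)=\infty$ for each $j=1,2,\dots$, then there exists $P\in\mathcal{P}$ with $$P\left(\bigcap_{j=1}^\infty\{f_{n,j}(\mathbf{X}_n)\ge1\ \text{i.o.}\}\right)=1.$$ (iii) Let $\{\mathbf{X}_n;n\ge1\}$ be a sequence of independent random vectors, $\mathbf{X}_n$ being $d_n$-dimensional. If $F_n\subset\mathbb{R}^{d_n}$ are closed sets with $\sum_{n=1}^\infty\mathcal{V}(\mathbf{X}_n\notin F_n)<\infty$, then there exists $P\in\mathcal{P}$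 with $P(\mathbf{X}_n\notin F_n\ \text{i.o.})=0$. If $F_{n,j}\subset\mathbb{R}^{d_n}$ are closed sets with $\sum_{n=1}^\infty\mathbb{V}(\mathbf{X}_n\in F_{n,j})=\infty$ for each $j=1,2,\dots$, then there exists $P\in\mathcal{P}$ with $$P\left(\bigcap_{j=1}^\infty\{\mathbf{X}_n\in F_{n,j}\ \text{i.o.}\}\right)=1.$$
   Context: A sub-linear expectation space $(\Omega,\mathcal{H},\mathbb{E})$: $(\Omega,\mathcal{F})$ measurable space, $\mathcal{H}$ a linear space of real functions on $\Omega$ closed under composition with locally Lipschitz functions of polynomial growth; $\mathbb{E}$ monotone, constant preserving, sub-additive, positively homogeneous. A capacity $V:\mathcal{F}\to[0,1]$ satisfies $V(\emptyset)=0$, $V(\Omega)=1$, and monotonicity; it is sub-additive if $V(A\cup B)\le V(A)+V(B)$. Random vectors have components in $\mathcal{H}$. Independence: $Y$ is independent of $X$ if $\mathbb{E}[\varphi(X,Y)]=\mathbb{E}\big[\mathbb{E}[\varphi(x,Y)]|_{x=X}\big]$ for all bounded Lipschitz $\varphi$; a sequence is independent if each term is independent of all preceding ones. Condition (CC): $\mathbb{E}[X]=\sup_{P\in\mathcal{P}}P[X]$ for bounded $X\in\mathcal{H}$, where $\mathcal{P}$ is a family of probability measures on $(\Omega,\sigma(\mathcal{H}))$ such that for any bounded $Y_1,Y_2,\dots\in\mathcal{H}$ and any $\{P_n\}\subset\mathcal{P}$ there exist a subsequence $\{n_k\}$ and $P\in\mathcal{P}$ with $P_{n_k}[\varphi(Y_1,\dots,Y_d)]\to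 P[\varphi(Y_1,\dots,Y_d)]$ for all bounded Lipschitz $\varphi$ on $\mathbb{R}^d$, $d\ge1$. *)

theory Defs
  imports "HOL-Probability.Probability"
begin

text \<open>Finite-dimensional Euclidean vectors are encoded as functions 'i => real whose
relevant coordinates form a finite index set I; R^d corresponds to I = {..<d}.\<close>

definition vnorm :: "'i set \<Rightarrow> ('i \<Rightarrow> real) \<Rightarrow> real" where
  "vnorm I x = sqrt (\<Sum>i\<in>I. (x i)\<^sup>2)"

definition lip_poly :: "'i set \<Rightarrow> (('i \<Rightarrow> real) \<Rightarrow> real) \<Rightarrow> bool" where
  "lip_poly I f \<longleftrightarrow> (\<exists>C (m::nat). \<forall>x y.
      \<bar>f x - f y\<bar> \<le> C * (1 + vnorm I x ^ m + vnorm I y ^ m) * vnorm I (\<lambda>i. x i - y i))"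

definition bdd_lip :: "'i set \<Rightarrow> (('i \<Rightarrow> real) \<Rightarrow> real) \<Rightarrow> bool" where
  "bdd_lip I f \<longleftrightarrow> (\<exists>C L. (\<forall>x. \<bar>f x\<bar> \<le> C) \<and>
      (\<forall>x y. \<bar>f x - f y\<bar> \<le> L * vnorm I (\<lambda>i. x i - y i)))"

definition bdd_lip2 :: "'i set \<Rightarrow> 'j set \<Rightarrow> (('i \<Rightarrow> real) \<Rightarrow> ('j \<Rightarrow> real) \<Rightarrow> real) \<Rightarrow> bool" where
  "bdd_lip2 I J f \<longleftrightarrow> (\<exists>C L. (\<forall>x y. \<bar>f x y\<bar> \<le> C) \<and>
      (\<forall>x y x' y'. \<bar>f x y - f x' y'\<bar> \<le>
          L * sqrt ((vnorm I (\<lambda>i. x i - x' i))\<^sup>2 + (vnorm J (\<lambda>j. y j - y' j))\<^sup>2)))"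

text \<open>Sub-linear expectation space (Omega = UNIV of type 'a).\<close>
definition sublinear_expectation_space ::
    "('a \<Rightarrow> real) set \<Rightarrow> (('a \<Rightarrow> real) \<Rightarrow> real) \<Rightarrow> bool" where
  "sublinear_expectation_space H E \<longleftrightarrow>
     (\<forall>X\<in>H. \<forall>Y\<in>H. (\<lambda>\<omega>. X \<omega> + Y \<omega>) \<in> H) \<and>
     (\<forall>X\<in>H. \<forall>c::real. (\<lambda>\<omega>. c * X \<omega>) \<in> H) \<and>
     (\<forall>n::nat. \<forall>X::nat \<Rightarrow> 'a \<Rightarrow> real. \<forall>\<phi>. (\<forall>i<n. X i \<in> H) \<longrightarrow> lip_poly {..<n} \<phi> \<longrightarrow>
         (\<lambda>\<omega>. \<phi> (\<lambda>i. X i \<omega>)) \<in> H) \<and>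
     (\<forall>X\<in>H. \<forall>Y\<in>H. (\<forall>\<omega>. X \<omega> \<ge> Y \<omega>) \<longrightarrow> E X \<ge> E Y) \<and>
     (\<forall>c. E (\<lambda>_. c) = c) \<and>
     (\<forall>X\<in>H. \<forall>Y\<in>H. E (\<lambda>\<omega>. X \<omega> + Y \<omega>) \<le> E X + E Y) \<and>
     (\<forall>X\<in>H. \<forall>a\<ge>0. E (\<lambda>\<omega>. a * X \<omega>) = a * E X)"

definition sigma_H :: "('a \<Rightarrow> real) set \<Rightarrow> 'a set set" where
  "sigma_H H = sigma_sets UNIV {X -` B | X B. X \<in> H \<and> B \<in> sets borel}"

definition condition_CC ::
    "('a \<Rightarrow> real) set \<Rightarrow> (('a \<Rightarrow> real) \<Rightarrow> real) \<Rightarrow> 'a measure set \<Rightarrow> bool" where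
  "condition_CC H E \<P> \<longleftrightarrow>
     (\<forall>P\<in>\<P>. prob_space P \<and> space P = UNIV \<and> sets P = sigma_H H) \<and>
     (\<forall>X\<in>H. bounded (range X) \<longrightarrow> E X = (SUP P\<in>\<P>. integral\<^sup>L P X)) \<and>
     (\<forall>Y::nat \<Rightarrow> 'a \<Rightarrow> real. \<forall>Ps::nat \<Rightarrow> 'a measure.
        (\<forall>i. Y i \<in> H \<and> bounded (range (Y i))) \<longrightarrow> (\<forall>n. Ps n \<in> \<P>) \<longrightarrow>
        (\<exists>r P. strict_mono r \<and> P \<in> \<P> \<and>
           (\<forall>d\<ge>1. \<forall>\<phi>. bdd_lip {..<d} \<phi> \<longrightarrow>
              (\<lambda>k. integral\<^sup>L (Ps (r k)) (\<lambda>\<omega>. \<phi> (\<lambda>i. Y i \<omega>)))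
                \<longlonglongrightarrow> integral\<^sup>L P (\<lambda>\<omega>. \<phi> (\<lambda>i. Y i \<omega>)))))"

definition subadd_capacity :: "'a set set \<Rightarrow> ('a set \<Rightarrow> real) \<Rightarrow> bool" where
  "subadd_capacity F V \<longleftrightarrow>
     V {} = 0 \<and> V UNIV = 1 \<and> (\<forall>A\<in>F. 0 \<le> V A \<and> V A \<le> 1) \<and>
     (\<forall>A\<in>F. \<forall>B\<in>F. A \<subseteq> B \<longrightarrow> V A \<le> V B) \<and>
     (\<forall>A\<in>F. \<forall>B\<in>F. V (A \<union> B) \<le> V A + V B)"

definition capacity_between ::
    "('a \<Rightarrow> real) set \<Rightarrow> (('a \<Rightarrow> real) \<Rightarrow> real) \<Rightarrow> 'a set set \<Rightarrow> ('a set \<Rightarrow> real) \<Rightarrow> bool" where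
  "capacity_between H E F V \<longleftrightarrow>
     (\<forall>A\<in>F. \<forall>f\<in>H. \<forall>g\<in>H. (\<forall>\<omega>. f \<omega> \<le> indicator A \<omega> \<and> indicator A \<omega> \<le> g \<omega>) \<longrightarrow>
        E f \<le> V A \<and> V A \<le> E g)"

definition conj_cap :: "('a set \<Rightarrow> real) \<Rightarrow> 'a set \<Rightarrow> real" where
  "conj_cap V A = 1 - V (- A)"

text \<open>Y (indexed by J) is independent of X (indexed by I) under E.\<close>
definition indep_vec ::
    "(('a \<Rightarrow> real) \<Rightarrow> real) \<Rightarrow> 'i set \<Rightarrow> ('a \<Rightarrow> 'i \<Rightarrow> real) \<Rightarrow> 'j set \<Rightarrow> ('a \<Rightarrow> 'j \<Rightarrow> real) \<Rightarrow> bool" where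
  "indep_vec E I X J Y \<longleftrightarrow> (\<forall>\<phi>. bdd_lip2 I J \<phi> \<longrightarrow>
      E (\<lambda>\<omega>. \<phi> (X \<omega>) (Y \<omega>)) = E (\<lambda>\<omega>. E (\<lambda>\<omega>'. \<phi> (X \<omega>) (Y \<omega>'))))"

definition random_vec :: "('a \<Rightarrow> real) set \<Rightarrow> nat \<Rightarrow> ('a \<Rightarrow> nat \<Rightarrow> real) \<Rightarrow> bool" where
  "random_vec H d X \<longleftrightarrow> (\<forall>i<d. (\<lambda>\<omega>. X \<omega> i) \<in> H)"

definition indep_seq_vec ::
    "('a \<Rightarrow> real) set \<Rightarrow> (('a \<Rightarrow> real) \<Rightarrow> real) \<Rightarrow> (nat \<Rightarrow> nat) \<Rightarrow> (nat \<Rightarrow> 'a \<Rightarrow> nat \<Rightarrow> real) \<Rightarrow> bool" where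
  "indep_seq_vec H E d X \<longleftrightarrow> (\<forall>n. random_vec H (d n) (X n)) \<and>
     (\<forall>n. indep_vec E {(k, i). k < n \<and> i < d k} (\<lambda>\<omega> (k, i). X k \<omega> i) {..<d n} (X n))"

definition indep_seq_rv ::
    "('a \<Rightarrow> real) set \<Rightarrow> (('a \<Rightarrow> real) \<Rightarrow> real) \<Rightarrow> (nat \<Rightarrow> 'a \<Rightarrow> real) \<Rightarrow> bool" where
  "indep_seq_rv H E X \<longleftrightarrow> indep_seq_vec H E (\<lambda>_. 1) (\<lambda>n \<omega> _. X n \<omega>)"

definition trunc :: "nat \<Rightarrow> (nat \<Rightarrow> real) \<Rightarrow> nat \<Rightarrow> real" where
  "trunc d x = (\<lambda>i. if i < d then x i else 0)"

text \<open>Closed subset of R^d, R^d embedded as {x. x i = 0 for i >= d} (a closed subspace of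
 the product space nat => real, carrying the Euclidean topology).\<close>
definition closed_Rd :: "nat \<Rightarrow> (nat \<Rightarrow> real) set \<Rightarrow> bool" where
  "closed_Rd d F \<longleftrightarrow> F \<subseteq> {x. \<forall>i\<ge>d. x i = 0} \<and> closed F"

end

theory Submission
  imports Defs
begin


definition cfun :: "nat \<Rightarrow> real \<Rightarrow> real" where
  "cfun k t = max 0 (min 1 (1 - real k * t))"

lemma cfun_01: "0 \<le> cfun k t" "cfun k t \<le> 1"
  by (auto simp: cfun_def)

lemma cfun_zero[simp]: "cfun k 0 = 1"
  by (simp add: cfun_def)

lemma clip_lip: "\<bar>max 0 (min 1 a) - max 0 (min 1 b)\<bar> \<le> \<bar>a - b\<bar>" for a b :: real
  by (auto simp: max_def min_def abs_if)

lemma cfun_lip: "\<bar>cfun k t - cfun k s\<bar> \<le> real k * \<bar>t - s\<bar>"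
proof -
  have "(1 - real k * t) - (1 - real k * s) = real k * (s - t)" by (simp add: algebra_simps)
  then have "\<bar>(1 - real k * t) - (1 - real k * s)\<bar> = real k * \<bar>t - s\<bar>"
    by (simp add: abs_mult abs_minus_commute)
  then show ?thesis unfolding cfun_def using clip_lip[of "1 - real k * t" "1 - real k * s"] by simp
qed

lemma cfun_mono: assumes "0 \<le> t" "k \<le> k'" shows "cfun k' t \<le> cfun k t"
proof -
  have "real k * t \<le> real k' * t" using assms by (intro mult_right_mono) auto
  then show ?thesis unfolding cfun_def by (auto simp: max_def min_def)
qed

lemma cfun_lim: assumes "0 \<le> t"
  shows "(\<lambda>k. 1 - cfun k t) \<longlonglongrightarrow> (if t = 0 then 0 else 1)"
proof (cases "t = 0")
  case True then show ?thesis by simp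
next
  case False
  with assms have tp: "t > 0" by simp
  obtain N :: nat where N: "1 / t < real N" using reals_Archimedean2 by blast
  have "\<forall>k\<ge>N. 1 - cfun k t = 1"
  proof (intro allI impI)
    fix k assume "N \<le> k"
    then have "1 / t < real k" using N by (meson less_le_trans of_nat_le_iff)
    then have "1 < real k * t" using tp by (simp add: field_simps)
    then show "1 - cfun k t = 1" unfolding cfun_def by (auto simp: max_def min_def)
  qed
  then have "eventually (\<lambda>k. 1 - cfun k t = 1) sequentially"
    unfolding eventually_sequentially by blast
  then have "(\<lambda>k. 1 - cfun k t) \<longlonglongrightarrow> 1"
    by (rule tendsto_eventually)
  with False show ?thesis by simp
qed

lemma vnorm_nonneg: "0 \<le> vnorm I x"
  by (simp add: vnorm_def sum_nonneg)

lemma abs_le_vnorm: assumes "finite I" "i \<in> I" shows "\<bar>x i\<bar> \<le> vnorm I x"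
proof -
  have "(x i)\<^sup>2 \<le> (\<Sum>j\<in>I. (x j)\<^sup>2)"
    using assms by (intro member_le_sum) auto
  then have "sqrt ((x i)\<^sup>2) \<le> vnorm I x" unfolding vnorm_def by (rule real_sqrt_le_mono)
  then show ?thesis by simp
qed

lemma sum_abs_le_vnorm:
  "(\<Sum>m<N. \<bar>x m\<bar>) \<le> real N * vnorm {..<N} x"
proof -
  have "(\<Sum>m<N. \<bar>x m\<bar>) \<le> (\<Sum>m<N. vnorm {..<N} x)"
    by (intro sum_mono abs_le_vnorm) auto
  then show ?thesis by simp
qed

lemma vnorm_subset: assumes "finite J" "I \<subseteq> J" shows "vnorm I x \<le> vnorm J x"
  unfolding vnorm_def using assms
  by (intro real_sqrt_le_mono sum_mono2) auto

definition lipN :: "nat \<Rightarrow> real \<Rightarrow> ((nat \<Rightarrow> real) \<Rightarrow> real) \<Rightarrow> bool" where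
  "lipN N L f \<longleftrightarrow> (\<forall>z z'. \<bar>f z - f z'\<bar> \<le> L * (\<Sum>m<N. \<bar>z m - z' m\<bar>))"

lemma lipN_nonneg_L: assumes "lipN N L f" shows "lipN N (max L 0) f"
  unfolding lipN_def
proof (intro allI)
  fix z z' :: "nat \<Rightarrow> real"
  have "L * (\<Sum>m<N. \<bar>z m - z' m\<bar>) \<le> max L 0 * (\<Sum>m<N. \<bar>z m - z' m\<bar>)"
    by (intro mult_right_mono) (auto simp: sum_nonneg)
  then show "\<bar>f z - f z'\<bar> \<le> max L 0 * (\<Sum>m<N. \<bar>z m - z' m\<bar>)"
    using assms unfolding lipN_def by (meson order_trans)
qed

lemma lipN_mono:
  assumes "lipN N L f" "N \<le> N'" "L \<le> L'" "0 \<le> L" shows "lipN N' L' f"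
  unfolding lipN_def
proof (intro allI)
  fix z z' :: "nat \<Rightarrow> real"
  have "(\<Sum>m<N. \<bar>z m - z' m\<bar>) \<le> (\<Sum>m<N'. \<bar>z m - z' m\<bar>)"
    using assms by (intro sum_mono2) auto
  moreover have "0 \<le> (\<Sum>m<N. \<bar>z m - z' m\<bar>)" by (simp add: sum_nonneg)
  ultimately have "L * (\<Sum>m<N. \<bar>z m - z' m\<bar>) \<le> L' * (\<Sum>m<N'. \<bar>z m - z' m\<bar>)"
    using assms by (intro mult_mono) auto
  then show "\<bar>f z - f z'\<bar> \<le> L' * (\<Sum>m<N'. \<bar>z m - z' m\<bar>)"
    using assms(1) unfolding lipN_def by (meson order_trans)
qed

lemma lipN_const: "lipN N 0 (\<lambda>_. c)"
  by (simp add: lipN_def)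

lemma lipN_add: assumes "lipN N L1 f" "lipN N L2 g"
  shows "lipN N (L1 + L2) (\<lambda>z. f z + g z)"
  unfolding lipN_def
proof (intro allI)
  fix z z' :: "nat \<Rightarrow> real"
  have "\<bar>f z - f z'\<bar> \<le> L1 * (\<Sum>m<N. \<bar>z m - z' m\<bar>)" "\<bar>g z - g z'\<bar> \<le> L2 * (\<Sum>m<N. \<bar>z m - z' m\<bar>)"
    using assms unfolding lipN_def by blast+
  then show "\<bar>f z + g z - (f z' + g z')\<bar> \<le> (L1 + L2) * (\<Sum>m<N. \<bar>z m - z' m\<bar>)"
    by (simp add: distrib_right abs_le_iff)
qed

lemma lipN_diff: assumes "lipN N L1 f" "lipN N L2 g"
  shows "lipN N (L1 + L2) (\<lambda>z. f z - g z)"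
  unfolding lipN_def
proof (intro allI)
  fix z z' :: "nat \<Rightarrow> real"
  have "\<bar>f z - f z'\<bar> \<le> L1 * (\<Sum>m<N. \<bar>z m - z' m\<bar>)" "\<bar>g z - g z'\<bar> \<le> L2 * (\<Sum>m<N. \<bar>z m - z' m\<bar>)"
    using assms unfolding lipN_def by blast+
  then show "\<bar>f z - g z - (f z' - g z')\<bar> \<le> (L1 + L2) * (\<Sum>m<N. \<bar>z m - z' m\<bar>)"
    by (simp add: distrib_right abs_le_iff)
qed

lemma lipN_cmult: assumes "lipN N L f"
  shows "lipN N (\<bar>c\<bar> * L) (\<lambda>z. c * f z)"
  unfolding lipN_def
proof (intro allI)
  fix z z' :: "nat \<Rightarrow> real"
  have "\<bar>f z - f z'\<bar> \<le> L * (\<Sum>m<N. \<bar>z m - z' m\<bar>)" using assms unfolding lipN_def by blast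
  then have "\<bar>c\<bar> * \<bar>f z - f z'\<bar> \<le> \<bar>c\<bar> * (L * (\<Sum>m<N. \<bar>z m - z' m\<bar>))"
    by (intro mult_left_mono) auto
  then show "\<bar>c * f z - c * f z'\<bar> \<le> \<bar>c\<bar> * L * (\<Sum>m<N. \<bar>z m - z' m\<bar>)"
    by (simp add: abs_mult right_diff_distrib[symmetric] mult.assoc)
qed

lemma lipN_mult:
  assumes "lipN N L1 f" "lipN N L2 g" "\<And>z. \<bar>f z\<bar> \<le> A" "\<And>z. \<bar>g z\<bar> \<le> B"
  shows "lipN N (B * L1 + A * L2) (\<lambda>z. f z * g z)"
  unfolding lipN_def
proof (intro allI)
  fix z z' :: "nat \<Rightarrow> real"
  define S where "S = (\<Sum>m<N. \<bar>z m - z' m\<bar>)"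
  have "f z * g z - f z' * g z' = (f z - f z') * g z + f z' * (g z - g z')"
    by (simp add: algebra_simps)
  then have e: "\<bar>f z * g z - f z' * g z'\<bar> \<le> \<bar>f z - f z'\<bar> * \<bar>g z\<bar> + \<bar>f z'\<bar> * \<bar>g z - g z'\<bar>"
    by (metis abs_mult abs_triangle_ineq)
  have A0: "0 \<le> A" using assms(3)[of z] by linarith
  have f1: "\<bar>f z - f z'\<bar> \<le> L1 * S" using assms(1) unfolding lipN_def S_def by blast
  have g1: "\<bar>g z - g z'\<bar> \<le> L2 * S" using assms(2) unfolding lipN_def S_def by blast
  have "\<bar>f z - f z'\<bar> * \<bar>g z\<bar> \<le> (L1 * S) * B"
    using f1 assms(4)[of z] by (intro mult_mono) auto
  moreover have "\<bar>f z'\<bar> * \<bar>g z - g z'\<bar> \<le> A * (L2 * S)"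
    using g1 assms(3)[of z'] A0 by (intro mult_mono) auto
  ultimately have "\<bar>f z * g z - f z' * g z'\<bar> \<le> (L1 * S) * B + A * (L2 * S)"
    using e by linarith
  then show "\<bar>f z * g z - f z' * g z'\<bar> \<le> (B * L1 + A * L2) * (\<Sum>m<N. \<bar>z m - z' m\<bar>)"
    unfolding S_def by (simp add: algebra_simps)
qed

lemma lipN_sum:
  assumes "finite S" "\<And>i. i \<in> S \<Longrightarrow> lipN N (L i) (f i)"
  shows "lipN N (\<Sum>i\<in>S. L i) (\<lambda>z. \<Sum>i\<in>S. f i z)"
  using assms
proof (induction S rule: finite_induct)
  case empty then show ?case by (simp add: lipN_def)
next
  case (insert x F)
  then show ?case by (simp add: lipN_add)
qed

lemma lipN_coord: assumes "m < N" shows "lipN N 1 (\<lambda>z. z m)"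
  unfolding lipN_def
proof (intro allI)
  fix z z' :: "nat \<Rightarrow> real"
  have "\<bar>z m - z' m\<bar> \<le> (\<Sum>m<N. \<bar>z m - z' m\<bar>)"
    by (rule member_le_sum[where f="\<lambda>m. \<bar>z m - z' m\<bar>"]) (use assms in auto)
  then show "\<bar>z m - z' m\<bar> \<le> 1 * (\<Sum>m<N. \<bar>z m - z' m\<bar>)" by simp
qed

lemma lipN_cfun: assumes "m < N" shows "lipN N (real k) (\<lambda>z. cfun k (z m))"
  unfolding lipN_def
proof (intro allI)
  fix z z' :: "nat \<Rightarrow> real"
  have "\<bar>z m - z' m\<bar> \<le> (\<Sum>m<N. \<bar>z m - z' m\<bar>)"
    by (rule member_le_sum[where f="\<lambda>m. \<bar>z m - z' m\<bar>"]) (use assms in auto)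
  then have "real k * \<bar>z m - z' m\<bar> \<le> real k * (\<Sum>m<N. \<bar>z m - z' m\<bar>)"
    by (intro mult_left_mono) auto
  then show "\<bar>cfun k (z m) - cfun k (z' m)\<bar> \<le> real k * (\<Sum>m<N. \<bar>z m - z' m\<bar>)"
    using cfun_lip by (meson order_trans)
qed

lemma lipN_prod:
  assumes "S \<subseteq> {..<N}"
  shows "lipN N (real N * real k) (\<lambda>z. \<Prod>m\<in>S. (1 - cfun k (z m)))"
  unfolding lipN_def
proof (intro allI)
  fix z z' :: "nat \<Rightarrow> real"
  have fin: "finite S" using assms finite_subset by blast
  have "\<bar>(\<Prod>m\<in>S. (1 - cfun k (z m))) - (\<Prod>m\<in>S. (1 - cfun k (z' m)))\<bar>
      \<le> (\<Sum>m\<in>S. \<bar>(1 - cfun k (z m)) - (1 - cfun k (z' m))\<bar>)"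
    using norm_prod_diff[of S "\<lambda>m. 1 - cfun k (z m)" "\<lambda>m. 1 - cfun k (z' m)"]
    using cfun_01 by (simp add: abs_le_iff)
  also have "\<dots> \<le> (\<Sum>m\<in>S. real k * \<bar>z m - z' m\<bar>)"
  proof (rule sum_mono)
    fix m
    have "\<bar>(1 - cfun k (z m)) - (1 - cfun k (z' m))\<bar> = \<bar>cfun k (z m) - cfun k (z' m)\<bar>"
      by (simp add: abs_minus_commute)
    then show "\<bar>(1 - cfun k (z m)) - (1 - cfun k (z' m))\<bar> \<le> real k * \<bar>z m - z' m\<bar>"
      using cfun_lip[of k "z m" "z' m"] by simp
  qed
  also have "\<dots> \<le> (\<Sum>m<N. real k * \<bar>z m - z' m\<bar>)"
    using assms by (intro sum_mono2) auto
  also have "\<dots> = real k * (\<Sum>m<N. \<bar>z m - z' m\<bar>)" by (simp add: sum_distrib_left)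
  also have "\<dots> \<le> real N * real k * (\<Sum>m<N. \<bar>z m - z' m\<bar>)"
  proof (cases "N = 0")
    case True then show ?thesis by simp
  next
    case False
    then have "real k \<le> real N * real k" by (simp add: mult_le_cancel_right1)
    then show ?thesis by (intro mult_right_mono) (auto simp: sum_nonneg)
  qed
  finally show "\<bar>(\<Prod>m\<in>S. 1 - cfun k (z m)) - (\<Prod>m\<in>S. 1 - cfun k (z' m))\<bar>
       \<le> real N * real k * (\<Sum>m<N. \<bar>z m - z' m\<bar>)" .
qed

lemma lipN_depends:
  assumes "lipN N L f" "\<And>m. m < N \<Longrightarrow> z m = z' m" shows "f z = f z'"
proof -
  have "(\<Sum>m<N. \<bar>z m - z' m\<bar>) = 0" using assms(2) by (intro sum.neutral) auto
  then have "\<bar>f z - f z'\<bar> \<le> 0" using assms(1) unfolding lipN_def by (metis mult_zero_right)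
  then show ?thesis by simp
qed

lemma lipN_lip_poly: assumes "lipN N L f" shows "lip_poly {..<N} f"
  unfolding lip_poly_def
proof (intro exI[of _ "\<bar>L\<bar> * real N"] exI[of _ "0::nat"] allI)
  fix x y :: "nat \<Rightarrow> real"
  have "\<bar>f x - f y\<bar> \<le> L * (\<Sum>m<N. \<bar>x m - y m\<bar>)" using assms unfolding lipN_def by blast
  also have "\<dots> \<le> \<bar>L\<bar> * (\<Sum>m<N. \<bar>x m - y m\<bar>)"
    by (intro mult_right_mono) (auto simp: sum_nonneg)
  also have "\<dots> \<le> \<bar>L\<bar> * (real N * vnorm {..<N} (\<lambda>i. x i - y i))"
    using sum_abs_le_vnorm[of "\<lambda>i. x i - y i" N] by (intro mult_left_mono) auto
  also have "\<dots> \<le> \<bar>L\<bar> * real N * (1 + vnorm {..<N} x ^ 0 + vnorm {..<N} y ^ 0) * vnorm {..<N} (\<lambda>i. x i - y i)"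
    using vnorm_nonneg[of "{..<N}" "\<lambda>i. x i - y i"]
    by (simp add: mult_le_cancel_right1 mult.assoc)
  finally show "\<bar>f x - f y\<bar> \<le> \<bar>L\<bar> * real N * (1 + vnorm {..<N} x ^ 0 + vnorm {..<N} y ^ 0) * vnorm {..<N} (\<lambda>i. x i - y i)" .
qed

lemma lipN_bdd_lip: assumes "lipN N L f" "\<And>z. \<bar>f z\<bar> \<le> C" shows "bdd_lip {..<N} f"
proof -
  have 2: "\<bar>f x - f y\<bar> \<le> (\<bar>L\<bar> * real N) * vnorm {..<N} (\<lambda>i. x i - y i)" for x y
  proof -
    have "\<bar>f x - f y\<bar> \<le> L * (\<Sum>m<N. \<bar>x m - y m\<bar>)" using assms unfolding lipN_def by blast
    also have "\<dots> \<le> \<bar>L\<bar> * (\<Sum>m<N. \<bar>x m - y m\<bar>)"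
      by (intro mult_right_mono) (auto simp: sum_nonneg)
    also have "\<dots> \<le> \<bar>L\<bar> * (real N * vnorm {..<N} (\<lambda>i. x i - y i))"
      using sum_abs_le_vnorm[of "\<lambda>i. x i - y i" N] by (intro mult_left_mono) auto
    finally show ?thesis by (simp add: mult.assoc)
  qed
  show ?thesis unfolding bdd_lip_def using 2 assms(2) by blast
qed




locale sle_setting =
  fixes H :: "('a \<Rightarrow> real) set" and E :: "('a \<Rightarrow> real) \<Rightarrow> real"
    and Ps :: "'a measure set" and F :: "'a set set" and V :: "'a set \<Rightarrow> real"
  assumes SLE: "sublinear_expectation_space H E"
    and CC: "condition_CC H E Ps"
    and Fsa: "sigma_algebra UNIV F"
    and Vcap: "subadd_capacity F V"
    and VE: "capacity_between H E F V"
begin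

lemmas SLE' = SLE[unfolded sublinear_expectation_space_def]

lemma H_add: "X \<in> H \<Longrightarrow> Y \<in> H \<Longrightarrow> (\<lambda>\<omega>. X \<omega> + Y \<omega>) \<in> H"
  using SLE'[THEN conjunct1] by blast

lemma H_scale: "X \<in> H \<Longrightarrow> (\<lambda>\<omega>. c * X \<omega>) \<in> H"
  using SLE'[THEN conjunct2, THEN conjunct1] by blast

lemma H_comp: fixes n :: nat and \<phi> :: "(nat \<Rightarrow> real) \<Rightarrow> real"
  assumes "\<And>i. i < n \<Longrightarrow> Z i \<in> H" "lip_poly {..<n} \<phi>"
  shows "(\<lambda>\<omega>. \<phi> (\<lambda>i. Z i \<omega>)) \<in> H"
  using SLE'[THEN conjunct2, THEN conjunct2, THEN conjunct1, rule_format, of n Z \<phi>] assms by blast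

lemma H_const: "(\<lambda>_. c) \<in> H"
proof -
  have "lip_poly {..<0} (\<lambda>_::nat\<Rightarrow>real. c)"
    unfolding lip_poly_def by (intro exI[of _ 0] exI[of _ "0::nat"]) simp
  from H_comp[OF _ this, of "\<lambda>_. \<lambda>_. 0"] show ?thesis by simp
qed

lemma E_mono: "X \<in> H \<Longrightarrow> Y \<in> H \<Longrightarrow> (\<And>\<omega>. Y \<omega> \<le> X \<omega>) \<Longrightarrow> E Y \<le> E X"
  using SLE'[THEN conjunct2, THEN conjunct2, THEN conjunct2, THEN conjunct1] by blast

lemma E_const[simp]: "E (\<lambda>_. c) = c"
  using SLE'[THEN conjunct2, THEN conjunct2, THEN conjunct2, THEN conjunct2, THEN conjunct1] by blast

lemma E_sub: "X \<in> H \<Longrightarrow> Y \<in> H \<Longrightarrow> E (\<lambda>\<omega>. X \<omega> + Y \<omega>) \<le> E X + E Y"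
  using SLE'[THEN conjunct2, THEN conjunct2, THEN conjunct2, THEN conjunct2, THEN conjunct2, THEN conjunct1] by blast

lemma E_hom: "X \<in> H \<Longrightarrow> 0 \<le> a \<Longrightarrow> E (\<lambda>\<omega>. a * X \<omega>) = a * E X"
  using SLE'[THEN conjunct2, THEN conjunct2, THEN conjunct2, THEN conjunct2, THEN conjunct2, THEN conjunct2] by blast

lemma E_add_const: assumes "X \<in> H" shows "E (\<lambda>\<omega>. X \<omega> + c) = E X + c"
proof -
  have Xc: "(\<lambda>\<omega>. X \<omega> + c) \<in> H" using H_add[OF assms H_const] .
  have "E (\<lambda>\<omega>. X \<omega> + c) \<le> E X + E (\<lambda>_. c)" using E_sub[OF assms H_const] .
  moreover have "E (\<lambda>\<omega>. (X \<omega> + c) + (- c)) \<le> E (\<lambda>\<omega>. X \<omega> + c) + E (\<lambda>_. - c)"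
    using E_sub[OF Xc H_const] .
  ultimately show ?thesis by simp
qed

lemma E_aff: assumes "X \<in> H" "0 \<le> t" shows "E (\<lambda>\<omega>. a + t * X \<omega>) = a + t * E X"
proof -
  have "E (\<lambda>\<omega>. a + t * X \<omega>) = E (\<lambda>\<omega>. t * X \<omega> + a)" by (simp add: add.commute)
  also have "\<dots> = E (\<lambda>\<omega>. t * X \<omega>) + a" by (rule E_add_const[OF H_scale[OF assms(1)]])
  also have "\<dots> = a + t * E X" using E_hom[OF assms] by simp
  finally show ?thesis .
qed

lemma E_bounds: assumes "X \<in> H" "\<And>\<omega>. lo \<le> X \<omega>" "\<And>\<omega>. X \<omega> \<le> hi"
  shows "lo \<le> E X" "E X \<le> hi"
  using E_mono[OF assms(1) H_const, of lo] E_mono[OF H_const assms(1), of hi] assms by auto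

lemma Ps_prop: assumes "P \<in> Ps" shows "prob_space P" "space P = UNIV" "sets P = sigma_H H"
  using CC assms unfolding condition_CC_def by auto

lemma H_meas: assumes "X \<in> H" "P \<in> Ps" shows "X \<in> borel_measurable P"
proof (rule measurableI)
  fix A :: "real set" assume "A \<in> sets borel"
  then have "X -` A \<in> sigma_H H" unfolding sigma_H_def
    using assms(1) by (intro sigma_sets.Basic) blast
  then show "X -` A \<inter> space P \<in> sets P" using Ps_prop[OF assms(2)] by simp
qed simp

lemma E_SUP: assumes "X \<in> H" "\<And>\<omega>. \<bar>X \<omega>\<bar> \<le> B"
  shows "E X = (SUP P\<in>Ps. integral\<^sup>L P X)"
proof -
  have "bounded (range X)" unfolding bounded_iff using assms(2) by auto
  then show ?thesis using CC assms(1) unfolding condition_CC_def by blast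
qed

lemma Ps_ne: "Ps \<noteq> {}"
proof
  assume e: "Ps = {}"
  have "E (\<lambda>_. 0) = (SUP P\<in>Ps. integral\<^sup>L P (\<lambda>_. 0))" by (rule E_SUP[where B=0]) (auto intro: H_const)
  moreover have "E (\<lambda>_. 1) = (SUP P\<in>Ps. integral\<^sup>L P (\<lambda>_. 1))" by (rule E_SUP[where B=1]) (auto intro: H_const)
  ultimately show False using e by simp
qed

lemma int_bound: assumes "X \<in> H" "\<And>\<omega>. \<bar>X \<omega>\<bar> \<le> B" "P \<in> Ps"
  shows "integrable P X" "integral\<^sup>L P X \<le> B"
proof -
  interpret prob_space P using Ps_prop[OF assms(3)] by simp
  have m: "X \<in> borel_measurable P" by (rule H_meas[OF assms(1,3)])
  have B0: "0 \<le> B" using assms(2)[of undefined] by linarith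
  show i: "integrable P X"
    by (rule integrable_const_bound[where B=B]) (use assms(2) m in auto)
  have "integral\<^sup>L P X \<le> integral\<^sup>L P (\<lambda>_. B)"
    by (rule integral_mono[OF i]) (use assms(2) in \<open>auto simp: abs_le_iff\<close>)
  then show "integral\<^sup>L P X \<le> B" by (simp add: prob_space)
qed

lemma int_le_E: assumes "X \<in> H" "\<And>\<omega>. \<bar>X \<omega>\<bar> \<le> B" "P \<in> Ps"
  shows "integral\<^sup>L P X \<le> E X"
proof -
  have "bdd_above ((\<lambda>P. integral\<^sup>L P X) ` Ps)"
    using int_bound[OF assms(1,2)] by (auto intro!: bdd_aboveI[where M=B])
  have "integral\<^sup>L P X \<le> (SUP P\<in>Ps. integral\<^sup>L P X)" by (rule cSUP_upper[OF assms(3)]) fact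
  then show ?thesis using E_SUP[OF assms(1,2)] by simp
qed

lemma exists_P: assumes "X \<in> H" "\<And>\<omega>. \<bar>X \<omega>\<bar> \<le> B" "0 < e"
  shows "\<exists>P\<in>Ps. E X - e < integral\<^sup>L P X"
proof -
  have bdd: "bdd_above ((\<lambda>P. integral\<^sup>L P X) ` Ps)"
    using int_bound[OF assms(1,2)] by (auto intro!: bdd_aboveI[where M=B])
  have "E X - e < (SUP P\<in>Ps. integral\<^sup>L P X)" using E_SUP[OF assms(1,2)] assms(3) by simp
  then show ?thesis using less_cSUP_iff[OF Ps_ne bdd] by blast
qed

lemma V_le_E: assumes "A \<in> F" "g \<in> H" "\<And>\<omega>. indicator A \<omega> \<le> g \<omega>" shows "V A \<le> E g"
proof -
  have "\<forall>\<omega>. (\<lambda>_. 0) \<omega> \<le> (indicator A \<omega> :: real) \<and> indicator A \<omega> \<le> g \<omega>" using assms(3) by simp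
  then show ?thesis using VE[unfolded capacity_between_def, rule_format, OF assms(1) H_const[of 0] assms(2)] by blast
qed

lemma V_01: "A \<in> F \<Longrightarrow> 0 \<le> V A" "A \<in> F \<Longrightarrow> V A \<le> 1"
  using Vcap unfolding subadd_capacity_def by auto

lemma F_compl: "A \<in> F \<Longrightarrow> - A \<in> F"
proof -
  assume "A \<in> F"
  then have "UNIV - A \<in> F" using Fsa by (simp add: sigma_algebra_iff2)
  then show "- A \<in> F" by (simp add: Compl_eq_Diff_UNIV)
qed

end



lemma vnorm_block:
  fixes x x' :: "nat \<times> nat \<Rightarrow> real"
  assumes "m < N"
  shows "vnorm {..<d m} (\<lambda>i. x (m, i) - x' (m, i)) \<le> vnorm {(k, i). k < N \<and> i < d k} (\<lambda>p. x p - x' p)"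
proof -
  let ?I = "{(k, i). k < N \<and> i < d k}"
  have I: "?I = (SIGMA k:{..<N}. {..<d k})" by auto
  have fin: "finite ?I" unfolding I by auto
  have "(\<Sum>i<d m. (x (m, i) - x' (m, i))\<^sup>2) = (\<Sum>p\<in>Pair m ` {..<d m}. (x p - x' p)\<^sup>2)"
    by (subst sum.reindex) (auto simp: inj_on_def)
  also have "\<dots> \<le> (\<Sum>p\<in>?I. (x p - x' p)\<^sup>2)"
    using assms by (intro sum_mono2[OF fin]) auto
  finally show ?thesis unfolding vnorm_def by (rule real_sqrt_le_mono)
qed

lemma le_sqrt_sum_sq: assumes "0 \<le> a" "0 \<le> b" shows "a \<le> sqrt (a\<^sup>2 + b\<^sup>2)" "b \<le> sqrt (a\<^sup>2 + b\<^sup>2)"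
proof -
  have "sqrt (a\<^sup>2) \<le> sqrt (a\<^sup>2 + b\<^sup>2)" "sqrt (b\<^sup>2) \<le> sqrt (a\<^sup>2 + b\<^sup>2)"
    by (intro real_sqrt_le_mono; simp)+
  then show "a \<le> sqrt (a\<^sup>2 + b\<^sup>2)" "b \<le> sqrt (a\<^sup>2 + b\<^sup>2)" using assms by simp_all
qed

lemma triangle3:
  fixes a b c a' b' c' :: real
  shows "\<bar>(a + b * c) - (a' + b' * c')\<bar> \<le> \<bar>a - a'\<bar> + \<bar>b\<bar> * \<bar>c - c'\<bar> + \<bar>c'\<bar> * \<bar>b - b'\<bar>"
proof -
  have e: "(a + b * c) - (a' + b' * c') = (a - a') + b * (c - c') + c' * (b - b')"
    by (simp add: algebra_simps)
  have "\<bar>(a - a') + b * (c - c') + c' * (b - b')\<bar> \<le> \<bar>a - a'\<bar> + \<bar>b * (c - c')\<bar> + \<bar>c' * (b - b')\<bar>"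
    by (rule order_trans[OF abs_triangle_ineq add_mono[OF abs_triangle_ineq order_refl]])
  then show ?thesis unfolding e by (simp add: abs_mult)
qed

locale seq_setting = sle_setting H E Ps F V
  for H :: "('a \<Rightarrow> real) set" and E Ps F V +
  fixes d :: "nat \<Rightarrow> nat" and X :: "nat \<Rightarrow> 'a \<Rightarrow> nat \<Rightarrow> real"
    and \<delta> :: "nat \<Rightarrow> (nat \<Rightarrow> real) \<Rightarrow> real" and K :: real
  assumes indep: "indep_seq_vec H E d X"
    and \<delta>0: "\<And>n y. 0 \<le> \<delta> n y" and \<delta>1: "\<And>n y. \<delta> n y \<le> 1"
    and \<delta>lip: "\<And>n y y'. \<bar>\<delta> n y - \<delta> n y'\<bar> \<le> K * vnorm {..<d n} (\<lambda>i. y i - y' i)"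
    and K0: "0 \<le> K"
begin

definition Y :: "nat \<Rightarrow> 'a \<Rightarrow> real" where "Y n \<omega> = \<delta> n (X n \<omega>)"

lemma Y01: "0 \<le> Y n \<omega>" "Y n \<omega> \<le> 1"
  unfolding Y_def using \<delta>0 \<delta>1 by auto

lemma X_coord_H: "i < d n \<Longrightarrow> (\<lambda>\<omega>. X n \<omega> i) \<in> H"
  using indep unfolding indep_seq_vec_def random_vec_def by blast

lemma Y_H: "Y n \<in> H"
proof -
  have lp: "lip_poly {..<d n} (\<delta> n)"
    unfolding lip_poly_def
  proof (intro exI[of _ K] exI[of _ "0::nat"] allI)
    fix y y' :: "nat \<Rightarrow> real"
    have "K * vnorm {..<d n} (\<lambda>i. y i - y' i) \<le> K * (1 + vnorm {..<d n} y ^ 0 + vnorm {..<d n} y' ^ 0) * vnorm {..<d n} (\<lambda>i. y i - y' i)"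
      using K0 vnorm_nonneg[of "{..<d n}" "\<lambda>i. y i - y' i"]
      by (simp add: mult_le_cancel_right1 mult.assoc mult_right_mono)
    then show "\<bar>\<delta> n y - \<delta> n y'\<bar> \<le> K * (1 + vnorm {..<d n} y ^ 0 + vnorm {..<d n} y' ^ 0) * vnorm {..<d n} (\<lambda>i. y i - y' i)"
      using \<delta>lip[of n y y'] by linarith
  qed
  have "(\<lambda>\<omega>. \<delta> n (\<lambda>i. X n \<omega> i)) \<in> H"
    by (rule H_comp[OF X_coord_H lp])
  then show ?thesis unfolding Y_def[abs_def] by simp
qed

lemma Psi_H: assumes "lipN N L \<Psi>" shows "(\<lambda>\<omega>. \<Psi> (\<lambda>m. Y m \<omega>)) \<in> H"
  by (rule H_comp[OF Y_H lipN_lip_poly[OF assms]])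

lemma Psi_meas: assumes "lipN N L \<Psi>" "P \<in> Ps" shows "(\<lambda>\<omega>. \<Psi> (\<lambda>m. Y m \<omega>)) \<in> borel_measurable P"
  by (rule H_meas[OF Psi_H[OF assms(1)] assms(2)])

lemma Y_meas: "P \<in> Ps \<Longrightarrow> Y n \<in> borel_measurable P"
  by (rule H_meas[OF Y_H])

lemma cY_H: "(\<lambda>\<omega>. cfun k (Y N \<omega>)) \<in> H"
  using Psi_H[OF lipN_cfun[of N "Suc N" k]] by simp

lemma SS:
  assumes la: "lipN N La \<alpha>" and lb: "lipN N Lb \<beta>"
    and ba: "\<And>z. \<bar>\<alpha> z\<bar> \<le> A" and bb: "\<And>z. \<bar>\<beta> z\<bar> \<le> B" and b0: "\<And>z. 0 \<le> \<beta> z"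
  shows "E (\<lambda>\<omega>. \<alpha> (\<lambda>m. Y m \<omega>) + \<beta> (\<lambda>m. Y m \<omega>) * cfun k (Y N \<omega>))
       = E (\<lambda>\<omega>. \<alpha> (\<lambda>m. Y m \<omega>) + \<beta> (\<lambda>m. Y m \<omega>) * E (\<lambda>\<omega>. cfun k (Y N \<omega>)))"
proof -
  let ?I = "{(k, i). k < N \<and> i < d k}"
  let ?J = "{..<d N}"
  let ?past = "\<lambda>\<omega> (k, i). X k \<omega> i"
  have ind: "indep_vec E ?I ?past ?J (X N)"
    using indep unfolding indep_seq_vec_def by blast
  define Zx where "Zx x = (\<lambda>m. if m < N then \<delta> m (\<lambda>i. x (m, i)) else 0)" for x :: "nat \<times> nat \<Rightarrow> real"
  define \<phi> where "\<phi> x y = \<alpha> (Zx x) + \<beta> (Zx x) * cfun k (\<delta> N y)" for x y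
  have la': "lipN N (max La 0) \<alpha>" and lb': "lipN N (max Lb 0) \<beta>"
    using lipN_nonneg_L la lb by auto
  have B0: "0 \<le> B" using bb[of undefined] by linarith
  have A0: "0 \<le> A" using ba[of undefined] by linarith
  have bl1: "\<bar>\<phi> x y\<bar> \<le> A + B" for x y
  proof -
    have "\<bar>\<phi> x y\<bar> \<le> \<bar>\<alpha> (Zx x)\<bar> + \<bar>\<beta> (Zx x)\<bar> * \<bar>cfun k (\<delta> N y)\<bar>"
      unfolding \<phi>_def by (metis abs_mult abs_triangle_ineq)
    also have "\<dots> \<le> A + B * 1"
      using ba bb cfun_01[of k "\<delta> N y"] B0 by (intro add_mono mult_mono) auto
    finally show "\<bar>\<phi> x y\<bar> \<le> A + B" by simp
  qed
  have bl2: "\<bar>\<phi> x y - \<phi> x' y'\<bar> \<le> ((max La 0 + max Lb 0) * real N * K + B * real k * K) *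
         sqrt ((vnorm ?I (\<lambda>i. x i - x' i))\<^sup>2 + (vnorm ?J (\<lambda>j. y j - y' j))\<^sup>2)" for x y x' y'
  proof -
    define vI where "vI = vnorm ?I (\<lambda>i. x i - x' i)"
    define vJ where "vJ = vnorm ?J (\<lambda>j. y j - y' j)"
    define s where "s = (\<Sum>m<N. \<bar>Zx x m - Zx x' m\<bar>)"
    have vI0: "0 \<le> vI" and vJ0: "0 \<le> vJ" unfolding vI_def vJ_def by (rule vnorm_nonneg)+
    have "s \<le> (\<Sum>m<N. K * vI)"
      unfolding s_def
    proof (rule sum_mono)
      fix m assume "m \<in> {..<N}"
      then have mN: "m < N" by simp
      have "\<bar>Zx x m - Zx x' m\<bar> \<le> K * vnorm {..<d m} (\<lambda>i. x (m, i) - x' (m, i))"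
        unfolding Zx_def using mN \<delta>lip by simp
      also have "\<dots> \<le> K * vI" unfolding vI_def
        by (intro mult_left_mono vnorm_block[OF mN] K0)
      finally show "\<bar>Zx x m - Zx x' m\<bar> \<le> K * vI" .
    qed
    then have sI: "s \<le> real N * K * vI" by simp
    have s0: "0 \<le> s" unfolding s_def by (simp add: sum_nonneg)
    have a1: "\<bar>\<alpha> (Zx x) - \<alpha> (Zx x')\<bar> \<le> max La 0 * s" using la' unfolding lipN_def s_def by blast
    have b1: "\<bar>\<beta> (Zx x) - \<beta> (Zx x')\<bar> \<le> max Lb 0 * s" using lb' unfolding lipN_def s_def by blast
    have c1: "\<bar>cfun k (\<delta> N y) - cfun k (\<delta> N y')\<bar> \<le> real k * (K * vJ)"
    proof -
      have "\<bar>cfun k (\<delta> N y) - cfun k (\<delta> N y')\<bar> \<le> real k * \<bar>\<delta> N y - \<delta> N y'\<bar>" by (rule cfun_lip)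
      also have "\<dots> \<le> real k * (K * vJ)" unfolding vJ_def by (intro mult_left_mono \<delta>lip) auto
      finally show ?thesis .
    qed
    have "\<bar>\<phi> x y - \<phi> x' y'\<bar> \<le> \<bar>\<alpha> (Zx x) - \<alpha> (Zx x')\<bar> + \<bar>\<beta> (Zx x)\<bar> * \<bar>cfun k (\<delta> N y) - cfun k (\<delta> N y')\<bar>
           + \<bar>cfun k (\<delta> N y')\<bar> * \<bar>\<beta> (Zx x) - \<beta> (Zx x')\<bar>"
      unfolding \<phi>_def by (rule triangle3)
    also have "\<dots> \<le> max La 0 * s + B * (real k * (K * vJ)) + 1 * (max Lb 0 * s)"
      using a1 b1 c1 bb cfun_01[of k "\<delta> N y'"] B0
      by (intro add_mono mult_mono) auto
    also have "\<dots> = (max La 0 + max Lb 0) * s + B * real k * K * vJ" by (simp add: algebra_simps)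
    also have "\<dots> \<le> (max La 0 + max Lb 0) * (real N * K * vI) + B * real k * K * vJ"
      using mult_left_mono[OF sI, of "max La 0 + max Lb 0"] by simp
    also have "\<dots> \<le> (max La 0 + max Lb 0) * (real N * K * sqrt (vI\<^sup>2 + vJ\<^sup>2)) + B * real k * K * sqrt (vI\<^sup>2 + vJ\<^sup>2)"
      using le_sqrt_sum_sq[OF vI0 vJ0] K0 B0
      by (intro add_mono mult_left_mono) (auto simp: mult_nonneg_nonneg)
    also have "\<dots> = ((max La 0 + max Lb 0) * real N * K + B * real k * K) * sqrt (vI\<^sup>2 + vJ\<^sup>2)"
      by (simp add: algebra_simps)
    finally show "\<bar>\<phi> x y - \<phi> x' y'\<bar> \<le> ((max La 0 + max Lb 0) * real N * K + B * real k * K) *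
         sqrt ((vnorm ?I (\<lambda>i. x i - x' i))\<^sup>2 + (vnorm ?J (\<lambda>j. y j - y' j))\<^sup>2)"
      unfolding vI_def vJ_def .
  qed
  have bl: "bdd_lip2 ?I ?J \<phi>"
    unfolding bdd_lip2_def using bl1 bl2 by blast
  have eq: "E (\<lambda>\<omega>. \<phi> (?past \<omega>) (X N \<omega>)) = E (\<lambda>\<omega>. E (\<lambda>\<omega>'. \<phi> (?past \<omega>) (X N \<omega>')))"
    using ind bl unfolding indep_vec_def by blast
  have Zp: "Zx (?past \<omega>) = (\<lambda>m. if m < N then Y m \<omega> else 0)" for \<omega>
    unfolding Zx_def Y_def by (auto simp: fun_eq_iff)
  have aeq: "\<alpha> (Zx (?past \<omega>)) = \<alpha> (\<lambda>m. Y m \<omega>)" for \<omega>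
    unfolding Zp by (rule lipN_depends[OF la]) simp
  have beq: "\<beta> (Zx (?past \<omega>)) = \<beta> (\<lambda>m. Y m \<omega>)" for \<omega>
    unfolding Zp by (rule lipN_depends[OF lb]) simp
  have lhs: "(\<lambda>\<omega>. \<phi> (?past \<omega>) (X N \<omega>)) = (\<lambda>\<omega>. \<alpha> (\<lambda>m. Y m \<omega>) + \<beta> (\<lambda>m. Y m \<omega>) * cfun k (Y N \<omega>))"
    unfolding \<phi>_def aeq beq by (simp add: Y_def)
  have inner: "E (\<lambda>\<omega>'. \<phi> (?past \<omega>) (X N \<omega>')) = \<alpha> (\<lambda>m. Y m \<omega>) + \<beta> (\<lambda>m. Y m \<omega>) * E (\<lambda>\<omega>. cfun k (Y N \<omega>))" for \<omega>
  proof -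
    have "(\<lambda>\<omega>'. \<phi> (?past \<omega>) (X N \<omega>')) = (\<lambda>\<omega>'. \<alpha> (\<lambda>m. Y m \<omega>) + \<beta> (\<lambda>m. Y m \<omega>) * cfun k (Y N \<omega>'))"
      unfolding \<phi>_def aeq beq by (simp add: Y_def)
    then show ?thesis using E_aff[OF cY_H b0] by simp
  qed
  show ?thesis using eq unfolding lhs inner by simp
qed

end



definition Qf :: "(nat \<Rightarrow> nat) \<Rightarrow> nat \<Rightarrow> nat \<Rightarrow> (nat \<Rightarrow> real) \<Rightarrow> real" where
  "Qf a k L z = (\<Sum>l<L. (1 - (\<Prod>m\<in>{a l..<a (Suc l)}. (1 - cfun k (z m)))))"

definition Rf :: "(nat \<Rightarrow> nat) \<Rightarrow> nat \<Rightarrow> nat \<Rightarrow> (nat \<Rightarrow> real) \<Rightarrow> real" where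
  "Rf a k L z = (\<Sum>l<L. (\<Prod>m\<in>{a l..<a (Suc l)}. (1 - cfun k (z m))))"

definition Qe :: "(nat \<Rightarrow> nat) \<Rightarrow> (nat \<Rightarrow> real) \<Rightarrow> nat \<Rightarrow> real" where
  "Qe a e L = (\<Sum>l<L. (1 - (\<Prod>m\<in>{a l..<a (Suc l)}. (1 - e m))))"

definition lipF :: "nat \<Rightarrow> ((nat \<Rightarrow> real) \<Rightarrow> real) \<Rightarrow> bool" where
  "lipF N f \<longleftrightarrow> (\<exists>L. lipN N L f)"

lemma lipF_const: "lipF N (\<lambda>_. c)"
  unfolding lipF_def using lipN_const by blast

lemma lipF_add: "lipF N f \<Longrightarrow> lipF N g \<Longrightarrow> lipF N (\<lambda>z. f z + g z)"
  unfolding lipF_def using lipN_add by blast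

lemma lipF_diff: "lipF N f \<Longrightarrow> lipF N g \<Longrightarrow> lipF N (\<lambda>z. f z - g z)"
  unfolding lipF_def using lipN_diff by blast

lemma lipF_cmult: "lipF N f \<Longrightarrow> lipF N (\<lambda>z. c * f z)"
  unfolding lipF_def using lipN_cmult by blast

lemma lipF_prod: "S \<subseteq> {..<N} \<Longrightarrow> lipF N (\<lambda>z. \<Prod>m\<in>S. (1 - cfun k (z m)))"
  unfolding lipF_def using lipN_prod by blast

lemma lipF_cfun: "m < N \<Longrightarrow> lipF N (\<lambda>z. cfun k (z m))"
  unfolding lipF_def using lipN_cfun by blast

lemma lipF_sum: assumes "finite S" "\<And>i. i \<in> S \<Longrightarrow> lipF N (f i)"
  shows "lipF N (\<lambda>z. \<Sum>i\<in>S. f i z)"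
proof -
  from assms(2) obtain L where "\<And>i. i \<in> S \<Longrightarrow> lipN N (L i) (f i)"
    unfolding lipF_def by metis
  then show ?thesis unfolding lipF_def using lipN_sum[OF assms(1)] by blast
qed

lemma block_sub: assumes "strict_mono a" "l < L" "a L \<le> N" shows "{a l..<a (Suc l)} \<subseteq> {..<N}"
proof -
  have "a (Suc l) \<le> a L" using assms(1,2) by (simp add: strict_mono_less_eq)
  then show ?thesis using assms(3) by auto
qed

lemma lipF_Q: assumes "strict_mono a" "a L \<le> N" shows "lipF N (Qf a k L)"
proof -
  have "lipF N (\<lambda>z. \<Sum>l<L. (1 - (\<Prod>m\<in>{a l..<a (Suc l)}. (1 - cfun k (z m)))))"
    by (intro lipF_sum lipF_diff lipF_const lipF_prod block_sub[OF assms(1) _ assms(2)]) auto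
  then show ?thesis unfolding Qf_def[abs_def] .
qed

lemma lipF_R: assumes "strict_mono a" "a L \<le> N" shows "lipF N (Rf a k L)"
proof -
  have "lipF N (\<lambda>z. \<Sum>l<L. (\<Prod>m\<in>{a l..<a (Suc l)}. (1 - cfun k (z m))))"
    by (intro lipF_sum lipF_prod block_sub[OF assms(1) _ assms(2)]) auto
  then show ?thesis unfolding Rf_def[abs_def] .
qed

lemma prod01: "0 \<le> (\<Prod>m\<in>S. (1 - cfun k (z m)))" "(\<Prod>m\<in>S. (1 - cfun k (z m))) \<le> 1"
  using cfun_01 by (auto intro!: prod_nonneg prod_le_1)

lemma Qf_bounds: "0 \<le> Qf a k L z" "Qf a k L z \<le> real L"
proof -
  have "0 \<le> (\<Sum>l<L. (1 - (\<Prod>m\<in>{a l..<a (Suc l)}. (1 - cfun k (z m)))))"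
    using prod01 by (intro sum_nonneg) (simp add: prod01)
  then show "0 \<le> Qf a k L z" unfolding Qf_def .
  have "(\<Sum>l<L. (1 - (\<Prod>m\<in>{a l..<a (Suc l)}. (1 - cfun k (z m))))) \<le> (\<Sum>l<L. 1)"
    by (intro sum_mono) (simp add: prod01)
  then show "Qf a k L z \<le> real L" unfolding Qf_def by simp
qed

lemma Rf_bounds: "0 \<le> Rf a k L z" "Rf a k L z \<le> real L"
proof -
  show "0 \<le> Rf a k L z" unfolding Rf_def by (intro sum_nonneg) (simp add: prod01)
  have "(\<Sum>l<L. (\<Prod>m\<in>{a l..<a (Suc l)}. (1 - cfun k (z m)))) \<le> (\<Sum>l<L. 1)"
    by (intro sum_mono) (simp add: prod01)
  then show "Rf a k L z \<le> real L" unfolding Rf_def by simp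
qed

lemma Qf_Rf: "Qf a k L z = real L - Rf a k L z"
  unfolding Qf_def Rf_def by (simp add: sum_subtractf)

lemma Rf_mono:
  assumes "strict_mono a" "L \<le> L'" "k \<le> k'" "\<And>m. 0 \<le> z m"
  shows "Rf a k L z \<le> Rf a k' L' z"
proof -
  have "(\<Sum>l<L. (\<Prod>m\<in>{a l..<a (Suc l)}. (1 - cfun k (z m))))
      \<le> (\<Sum>l<L. (\<Prod>m\<in>{a l..<a (Suc l)}. (1 - cfun k' (z m))))"
    using cfun_mono[OF assms(4) assms(3)] cfun_01
    by (intro sum_mono prod_mono) auto
  also have "\<dots> \<le> (\<Sum>l<L'. (\<Prod>m\<in>{a l..<a (Suc l)}. (1 - cfun k' (z m))))"
    using assms(2) by (intro sum_mono2) (auto simp: prod01)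
  finally show ?thesis unfolding Rf_def .
qed

context seq_setting
begin

lemma e01: "0 \<le> E (\<lambda>\<omega>. cfun k (Y m \<omega>))" "E (\<lambda>\<omega>. cfun k (Y m \<omega>)) \<le> 1"
  using E_bounds[OF cY_H, of 0 k m 1] cfun_01 by auto

lemma lipF_H: "lipF N f \<Longrightarrow> (\<lambda>\<omega>. f (\<lambda>m. Y m \<omega>)) \<in> H"
  unfolding lipF_def using Psi_H by blast

lemma S_step:
  fixes a :: "nat \<Rightarrow> nat" and k l :: nat and e :: "nat \<Rightarrow> real"
  assumes a: "strict_mono a" and base: "E (\<lambda>\<omega>. Qf a k l (\<lambda>m. Y m \<omega>)) = Qe a e l"
    and e_def: "e = (\<lambda>m. E (\<lambda>\<omega>. cfun k (Y m \<omega>)))"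
  shows "0 \<le> t \<Longrightarrow> t \<le> 1 \<Longrightarrow>
    E (\<lambda>\<omega>. Qf a k l (\<lambda>m. Y m \<omega>) + t * (1 - (\<Prod>m\<in>{a l..<a l + p}. (1 - cfun k (Y m \<omega>)))))
      = Qe a e l + t * (1 - (\<Prod>m\<in>{a l..<a l + p}. (1 - e m)))"
proof (induction p arbitrary: t)
  case 0
  then show ?case using base by simp
next
  case (Suc p)
  define N where "N = a l + p"
  have pS: "(\<Prod>m\<in>{a l..<a l + Suc p}. g m) = (\<Prod>m\<in>{a l..<N}. g m) * g N" for g :: "nat \<Rightarrow> real"
    unfolding N_def by (simp add: prod.atLeastLessThan_Suc)
  define Pr where "Pr z = (\<Prod>m\<in>{a l..<N}. (1 - cfun k (z m)))" for z :: "nat \<Rightarrow> real"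
  define \<alpha> where "\<alpha> z = Qf a k l z + t * (1 - Pr z)" for z
  define \<beta> where "\<beta> z = t * Pr z" for z
  have lQ: "lipF N (Qf a k l)" using lipF_Q[OF a, of l N] unfolding N_def by simp
  have lP: "lipF N Pr" unfolding Pr_def[abs_def] by (rule lipF_prod) auto
  have lA: "lipF N \<alpha>" unfolding \<alpha>_def[abs_def] using lQ lP
    by (intro lipF_add lipF_cmult lipF_diff lipF_const)
  have lB: "lipF N \<beta>" unfolding \<beta>_def[abs_def] using lP by (intro lipF_cmult)
  obtain La Lb where La: "lipN N La \<alpha>" and Lb: "lipN N Lb \<beta>" using lA lB unfolding lipF_def by blast
  have P01: "0 \<le> Pr z" "Pr z \<le> 1" for z unfolding Pr_def by (rule prod01)+
  have bA: "\<bar>\<alpha> z\<bar> \<le> real l + 1" for z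
  proof -
    have "0 \<le> t * (1 - Pr z)" "t * (1 - Pr z) \<le> 1"
      using Suc.prems P01[of z] by (auto intro: mult_le_one)
    then show ?thesis unfolding \<alpha>_def using Qf_bounds[of a k l z] by auto
  qed
  have bB: "\<bar>\<beta> z\<bar> \<le> 1" and b0: "0 \<le> \<beta> z" for z
    unfolding \<beta>_def using Suc.prems P01[of z] by (auto intro: mult_le_one)
  have eN: "0 \<le> e N" "e N \<le> 1" unfolding e_def using e01 by auto
  have f1: "(\<lambda>\<omega>. Qf a k l (\<lambda>m. Y m \<omega>) + t * (1 - (\<Prod>m\<in>{a l..<a l + Suc p}. (1 - cfun k (Y m \<omega>)))))
      = (\<lambda>\<omega>. \<alpha> (\<lambda>m. Y m \<omega>) + \<beta> (\<lambda>m. Y m \<omega>) * cfun k (Y N \<omega>))"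
    unfolding pS \<alpha>_def \<beta>_def Pr_def by (simp add: fun_eq_iff algebra_simps)
  have f2: "(\<lambda>\<omega>. \<alpha> (\<lambda>m. Y m \<omega>) + \<beta> (\<lambda>m. Y m \<omega>) * E (\<lambda>\<omega>. cfun k (Y N \<omega>)))
      = (\<lambda>\<omega>. (Qf a k l (\<lambda>m. Y m \<omega>) + (t * (1 - e N)) * (1 - (\<Prod>m\<in>{a l..<a l + p}. (1 - cfun k (Y m \<omega>))))) + t * e N)"
    unfolding \<alpha>_def \<beta>_def Pr_def e_def N_def by (simp add: fun_eq_iff algebra_simps)
  have memH: "(\<lambda>\<omega>. Qf a k l (\<lambda>m. Y m \<omega>) + (t * (1 - e N)) * (1 - (\<Prod>m\<in>{a l..<a l + p}. (1 - cfun k (Y m \<omega>))))) \<in> H"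
  proof -
    have "lipF N (\<lambda>z. Qf a k l z + (t * (1 - e N)) * (1 - Pr z))"
      using lQ lP by (intro lipF_add lipF_cmult lipF_diff lipF_const)
    from lipF_H[OF this] show ?thesis unfolding Pr_def N_def .
  qed
  have t': "0 \<le> t * (1 - e N)" "t * (1 - e N) \<le> 1"
    using Suc.prems eN by (auto intro: mult_le_one)
  have "E (\<lambda>\<omega>. Qf a k l (\<lambda>m. Y m \<omega>) + t * (1 - (\<Prod>m\<in>{a l..<a l + Suc p}. (1 - cfun k (Y m \<omega>)))))
      = E (\<lambda>\<omega>. \<alpha> (\<lambda>m. Y m \<omega>) + \<beta> (\<lambda>m. Y m \<omega>) * E (\<lambda>\<omega>. cfun k (Y N \<omega>)))"
    unfolding f1 by (rule SS[OF La Lb bA bB b0])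
  also have "\<dots> = E (\<lambda>\<omega>. Qf a k l (\<lambda>m. Y m \<omega>) + (t * (1 - e N)) * (1 - (\<Prod>m\<in>{a l..<a l + p}. (1 - cfun k (Y m \<omega>))))) + t * e N"
    unfolding f2 by (rule E_add_const[OF memH])
  also have "\<dots> = Qe a e l + (t * (1 - e N)) * (1 - (\<Prod>m\<in>{a l..<a l + p}. (1 - e m))) + t * e N"
    using Suc.IH[OF t'] by simp
  also have "\<dots> = Qe a e l + t * (1 - (\<Prod>m\<in>{a l..<a l + Suc p}. (1 - e m)))"
    unfolding pS N_def by (simp add: algebra_simps)
  finally show ?case .
qed

lemma E_Q:
  assumes a: "strict_mono a"
  shows "E (\<lambda>\<omega>. Qf a k L (\<lambda>m. Y m \<omega>)) = Qe a (\<lambda>m. E (\<lambda>\<omega>. cfun k (Y m \<omega>))) L"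
proof (induction L)
  case 0
  then show ?case by (simp add: Qf_def Qe_def)
next
  case (Suc L)
  have le: "a L \<le> a (Suc L)" using a by (simp add: strict_mono_less_eq)
  have eqa: "a L + (a (Suc L) - a L) = a (Suc L)" using le by simp
  have "E (\<lambda>\<omega>. Qf a k L (\<lambda>m. Y m \<omega>) + 1 * (1 - (\<Prod>m\<in>{a L..<a L + (a (Suc L) - a L)}. (1 - cfun k (Y m \<omega>)))))
      = Qe a (\<lambda>m. E (\<lambda>\<omega>. cfun k (Y m \<omega>))) L + 1 * (1 - (\<Prod>m\<in>{a L..<a L + (a (Suc L) - a L)}. (1 - E (\<lambda>\<omega>. cfun k (Y m \<omega>)))))"
    by (rule S_step[OF a Suc.IH refl]) auto
  then show ?case unfolding eqa by (simp add: Qf_def Qe_def)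
qed

end



lemma prod_indic:
  fixes y :: "nat \<Rightarrow> real"
  assumes "finite S"
  shows "(\<Prod>m\<in>S. (if y m = 0 then 0 else 1::real)) = (if (\<forall>m\<in>S. y m \<noteq> 0) then 1 else 0)"
  using assms by (induction S rule: finite_induct) auto

context seq_setting
begin

lemma int_bound_Psi:
  assumes "lipF N f" "\<And>z. \<bar>f z\<bar> \<le> B" "P \<in> Ps"
  shows "integrable P (\<lambda>\<omega>. f (\<lambda>m. Y m \<omega>))"
  using int_bound(1)[OF lipF_H[OF assms(1)] _ assms(3)] assms(2) by blast

lemma block_BC:
  fixes a :: "nat \<Rightarrow> nat" and v :: "nat \<Rightarrow> real" and C0 :: real
  assumes a: "strict_mono a"
    and v: "\<And>n k. v n \<le> E (\<lambda>\<omega>. cfun k (Y n \<omega>))"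
    and C0: "\<And>L. (\<Sum>l<L. \<Prod>m\<in>{a l..<a (Suc l)}. (1 - v m)) \<le> C0"
  shows "\<exists>P\<in>Ps. measure P (limsup (\<lambda>l. {\<omega>. \<forall>m\<in>{a l..<a (Suc l)}. Y m \<omega> \<noteq> 0})) = 0"
proof -
  define C where "C l = {\<omega>. \<forall>m\<in>{a l..<a (Suc l)}. Y m \<omega> \<noteq> 0}" for l
  have C00: "0 \<le> C0" using C0[of 0] by simp
  have step1: "\<exists>P\<in>Ps. integral\<^sup>L P (\<lambda>\<omega>. Rf a K (Suc K) (\<lambda>m. Y m \<omega>)) \<le> C0 + 1" for K
  proof -
    define e where "e m = E (\<lambda>\<omega>. cfun K (Y m \<omega>))" for m
    have EQ: "E (\<lambda>\<omega>. Qf a K (Suc K) (\<lambda>m. Y m \<omega>)) = Qe a e (Suc K)"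
      unfolding e_def by (rule E_Q[OF a])
    have "(\<Sum>l<Suc K. \<Prod>m\<in>{a l..<a (Suc l)}. (1 - e m)) \<le> (\<Sum>l<Suc K. \<Prod>m\<in>{a l..<a (Suc l)}. (1 - v m))"
    proof (intro sum_mono prod_mono conjI)
      fix l m
      show "0 \<le> 1 - e m" unfolding e_def using e01 by simp
      show "1 - e m \<le> 1 - v m" unfolding e_def using v by simp
    qed
    also have "\<dots> \<le> C0" by (rule C0)
    finally have "(\<Sum>l<Suc K. \<Prod>m\<in>{a l..<a (Suc l)}. (1 - e m)) \<le> C0" .
    then have Qe_ge: "real (Suc K) - C0 \<le> Qe a e (Suc K)"
      unfolding Qe_def by (simp add: sum_subtractf)
    have lQ: "lipF (a (Suc K)) (Qf a K (Suc K))" by (rule lipF_Q[OF a order_refl])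
    have memQ: "(\<lambda>\<omega>. Qf a K (Suc K) (\<lambda>m. Y m \<omega>)) \<in> H" by (rule lipF_H[OF lQ])
    have bQ: "\<bar>Qf a K (Suc K) (\<lambda>m. Y m \<omega>)\<bar> \<le> real (Suc K)" for \<omega>
      using Qf_bounds[of a K "Suc K" "\<lambda>m. Y m \<omega>"] by simp
    obtain P where P: "P \<in> Ps" and Pi: "E (\<lambda>\<omega>. Qf a K (Suc K) (\<lambda>m. Y m \<omega>)) - 1 < integral\<^sup>L P (\<lambda>\<omega>. Qf a K (Suc K) (\<lambda>m. Y m \<omega>))"
      using exists_P[OF memQ bQ, of 1] by auto
    interpret Pp: prob_space P using Ps_prop[OF P] by simp
    have iQ: "integrable P (\<lambda>\<omega>. Qf a K (Suc K) (\<lambda>m. Y m \<omega>))"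
      by (rule int_bound_Psi[OF lQ _ P]) (use Qf_bounds in \<open>auto simp: abs_le_iff\<close>)
    have "integral\<^sup>L P (\<lambda>\<omega>. Rf a K (Suc K) (\<lambda>m. Y m \<omega>)) = integral\<^sup>L P (\<lambda>\<omega>. real (Suc K) - Qf a K (Suc K) (\<lambda>m. Y m \<omega>))"
      by (simp add: Qf_Rf)
    also have "\<dots> = real (Suc K) - integral\<^sup>L P (\<lambda>\<omega>. Qf a K (Suc K) (\<lambda>m. Y m \<omega>))"
      using iQ by (simp add: Pp.prob_space)
    also have "\<dots> \<le> C0 + 1" using Pi EQ Qe_ge by linarith
    finally show ?thesis using P by blast
  qed
  then obtain Pk where Pk: "\<And>K. Pk K \<in> Ps" "\<And>K. integral\<^sup>L (Pk K) (\<lambda>\<omega>. Rf a K (Suc K) (\<lambda>m. Y m \<omega>)) \<le> C0 + 1"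
    by metis
  have Yb: "Y i \<in> H \<and> bounded (range (Y i))" for i
  proof -
    have "range (Y i) \<subseteq> {0..1}" using Y01 by auto
    then show "Y i \<in> H \<and> bounded (range (Y i))" using Y_H bounded_subset[OF bounded_closed_interval] by blast
  qed
  obtain r P where r: "strict_mono r" and P: "P \<in> Ps"
    and conv: "\<And>dd \<phi>. 1 \<le> dd \<Longrightarrow> bdd_lip {..<dd} \<phi> \<Longrightarrow>
       (\<lambda>k. integral\<^sup>L (Pk (r k)) (\<lambda>\<omega>. \<phi> (\<lambda>i. Y i \<omega>))) \<longlonglongrightarrow> integral\<^sup>L P (\<lambda>\<omega>. \<phi> (\<lambda>i. Y i \<omega>))"
    using CC[unfolded condition_CC_def, THEN conjunct2, THEN conjunct2, rule_format, of Y Pk, OF Yb Pk(1)] by blast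
  interpret Pp: prob_space P using Ps_prop[OF P] by simp
  have spP: "space P = UNIV" using Ps_prop[OF P] by simp
  have iR: "integrable Q (\<lambda>\<omega>. Rf a k L (\<lambda>m. Y m \<omega>))" if "Q \<in> Ps" for Q k L
    by (rule int_bound_Psi[OF lipF_R[OF a order_refl] _ that]) (use Rf_bounds in \<open>auto simp: abs_le_iff\<close>)
  have bnd: "integral\<^sup>L P (\<lambda>\<omega>. Rf a k L (\<lambda>m. Y m \<omega>)) \<le> C0 + 1" for k L
  proof (cases "L = 0")
    case True
    then show ?thesis using C00 by (simp add: Rf_def)
  next
    case False
    have L1: "1 \<le> a L" using seq_suble[OF a, of L] False by linarith
    have bl: "bdd_lip {..<a L} (Rf a k L)"
    proof -
      obtain LL where "lipN (a L) LL (Rf a k L)" using lipF_R[OF a order_refl] unfolding lipF_def by blast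
      then show ?thesis by (rule lipN_bdd_lip) (use Rf_bounds in \<open>auto simp: abs_le_iff\<close>)
    qed
    show ?thesis
    proof (rule LIMSEQ_le_const2[OF conv[OF L1 bl]])
      show "\<exists>N. \<forall>i\<ge>N. integral\<^sup>L (Pk (r i)) (\<lambda>\<omega>. Rf a k L (\<lambda>i. Y i \<omega>)) \<le> C0 + 1"
      proof (intro exI[of _ "max L k"] allI impI)
        fix i assume "max L k \<le> i"
        then have ri: "L \<le> Suc (r i)" "k \<le> r i" using seq_suble[OF r, of i] by auto
        have "integral\<^sup>L (Pk (r i)) (\<lambda>\<omega>. Rf a k L (\<lambda>i. Y i \<omega>)) \<le> integral\<^sup>L (Pk (r i)) (\<lambda>\<omega>. Rf a (r i) (Suc (r i)) (\<lambda>i. Y i \<omega>))"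
          by (intro integral_mono iR Pk(1) Rf_mono[OF a ri(1) ri(2)]) (simp add: Y01)
        also have "\<dots> \<le> C0 + 1" by (rule Pk(2))
        finally show "integral\<^sup>L (Pk (r i)) (\<lambda>\<omega>. Rf a k L (\<lambda>i. Y i \<omega>)) \<le> C0 + 1" .
      qed
    qed
  qed
  have Ymeas[measurable]: "Y m \<in> borel_measurable P" for m by (rule Y_meas[OF P])
  have Csets: "C l \<in> sets P" for l
  proof -
    have "C l = {\<omega> \<in> space P. \<forall>m\<in>{a l..<a (Suc l)}. Y m \<omega> \<noteq> 0}" unfolding C_def spP by simp
    also have "\<dots> \<in> sets P" by measurable
    finally show ?thesis .
  qed
  have sumC: "(\<Sum>l<L. measure P (C l)) \<le> C0 + 1" for L
  proof -
    have lim: "(\<lambda>k. integral\<^sup>L P (\<lambda>\<omega>. Rf a k L (\<lambda>m. Y m \<omega>))) \<longlonglongrightarrow> integral\<^sup>L P (\<lambda>\<omega>. \<Sum>l<L. indicator (C l) \<omega>)"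
    proof (rule integral_dominated_convergence[where w="\<lambda>_. real L"])
      show "(\<lambda>\<omega>. \<Sum>l<L. indicator (C l) \<omega> :: real) \<in> borel_measurable P"
        using Csets by (intro borel_measurable_sum borel_measurable_indicator) auto
      show "(\<lambda>\<omega>. Rf a k L (\<lambda>m. Y m \<omega>)) \<in> borel_measurable P" for k
        using lipF_R[OF a order_refl, of L k] unfolding lipF_def using Psi_meas[OF _ P] by blast
      show "integrable P (\<lambda>_. real L)" by simp
      show "AE \<omega> in P. norm (Rf a k L (\<lambda>m. Y m \<omega>)) \<le> real L" for k
        using Rf_bounds by (auto simp: abs_le_iff)
      show "AE \<omega> in P. (\<lambda>k. Rf a k L (\<lambda>m. Y m \<omega>)) \<longlonglongrightarrow> (\<Sum>l<L. indicator (C l) \<omega>)"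
      proof (rule AE_I2)
        fix \<omega>
        have "(\<lambda>k. \<Sum>l<L. \<Prod>m\<in>{a l..<a (Suc l)}. (1 - cfun k (Y m \<omega>)))
              \<longlonglongrightarrow> (\<Sum>l<L. \<Prod>m\<in>{a l..<a (Suc l)}. (if Y m \<omega> = 0 then 0 else 1))"
          by (intro tendsto_sum tendsto_prod cfun_lim Y01)
        moreover have "(\<Prod>m\<in>{a l..<a (Suc l)}. (if Y m \<omega> = 0 then 0 else 1::real)) = indicator (C l) \<omega>" for l
          unfolding prod_indic[OF finite_atLeastLessThan] C_def by (simp add: indicator_def)
        ultimately show "(\<lambda>k. Rf a k L (\<lambda>m. Y m \<omega>)) \<longlonglongrightarrow> (\<Sum>l<L. indicator (C l) \<omega>)"
          unfolding Rf_def by simp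
      qed
    qed
    have "integral\<^sup>L P (\<lambda>\<omega>. \<Sum>l<L. indicator (C l) \<omega>) \<le> C0 + 1"
      by (rule LIMSEQ_le_const2[OF lim]) (use bnd in auto)
    moreover have "integral\<^sup>L P (\<lambda>\<omega>. \<Sum>l<L. indicator (C l) \<omega> :: real) = (\<Sum>l<L. measure P (C l))"
    proof -
      have "integral\<^sup>L P (\<lambda>\<omega>. \<Sum>l<L. indicator (C l) \<omega> :: real) = (\<Sum>l<L. integral\<^sup>L P (indicator (C l) :: 'a \<Rightarrow> real))"
        by (rule Bochner_Integration.integral_sum[where f="\<lambda>l. (indicator (C l) :: 'a \<Rightarrow> real)"]) (intro integrable_real_indicator Csets, simp add: Pp.emeasure_finite less_top[symmetric])
      then show ?thesis using spP by simp
    qed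
    ultimately show ?thesis by simp
  qed
  have summ: "summable (\<lambda>l. measure P (C l))"
  proof (rule bounded_imp_summable)
    show "0 \<le> measure P (C n)" for n by simp
    show "(\<Sum>k\<le>n. measure P (C k)) \<le> C0 + 1" for n
      using sumC[of "Suc n"] by (simp add: lessThan_Suc_atMost)
  qed
  have "limsup C \<in> null_sets P"
    by (rule borel_cantelli_limsup1[OF Csets _ summ]) (simp add: Pp.emeasure_finite less_top[symmetric])
  then have "measure P (limsup C) = 0" by (simp add: measure_def null_setsD1)
  then show ?thesis using P unfolding C_def by blast
qed

end



definition dfun :: "nat \<Rightarrow> (nat \<Rightarrow> real) set \<Rightarrow> (nat \<Rightarrow> real) \<Rightarrow> real" where
  "dfun d Fs y = (if Fs = {} then 1 else min 1 (infdist (trunc d y) Fs))"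

lemma dfun01: "0 \<le> dfun d Fs y" "dfun d Fs y \<le> 1"
  unfolding dfun_def by (auto simp: infdist_nonneg)

lemma dist_trunc: "dist (trunc d y) (trunc d y') \<le> 2 * vnorm {..<d} (\<lambda>i. y i - y' i)"
proof -
  define v where "v = vnorm {..<d} (\<lambda>i. y i - y' i)"
  have v0: "0 \<le> v" unfolding v_def by (rule vnorm_nonneg)
  have ci: "dist (trunc d y i) (trunc d y' i) \<le> v" for i
  proof (cases "i < d")
    case True
    then have "dist (trunc d y i) (trunc d y' i) = \<bar>y i - y' i\<bar>" by (simp add: trunc_def dist_real_def)
    also have "\<dots> \<le> v" unfolding v_def using abs_le_vnorm[of "{..<d}" i "\<lambda>i. y i - y' i"] True by simp
    finally show ?thesis .
  next
    case False
    then show ?thesis using v0 by (simp add: trunc_def)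
  qed
  have sg: "summable (\<lambda>n. (1/2::real)^n * v)"
    by (intro summable_mult2 summable_geometric) simp
  have le: "(1/2)^n * min (dist (trunc d y (from_nat n)) (trunc d y' (from_nat n))) 1 \<le> (1/2::real)^n * v" for n
    using ci[of "from_nat n"] by (intro mult_left_mono) auto
  have sf: "summable (\<lambda>n. (1/2::real)^n * min (dist (trunc d y (from_nat n)) (trunc d y' (from_nat n))) 1)"
    by (rule summable_comparison_test'[OF sg]) (use le in auto)
  have "dist (trunc d y) (trunc d y') = (\<Sum>n. (1/2)^n * min (dist (trunc d y (from_nat n)) (trunc d y' (from_nat n))) 1)"
    by (simp add: dist_fun_def)
  also have "\<dots> \<le> (\<Sum>n. (1/2::real)^n * v)" by (rule suminf_le[OF le sf sg])
  also have "\<dots> = 2 * v" using suminf_geometric[of "1/2::real"] by (simp add: suminf_mult2[symmetric])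
  finally show ?thesis unfolding v_def .
qed

lemma min1_lip: "\<bar>min 1 a - min 1 b\<bar> \<le> \<bar>a - b\<bar>" for a b :: real
  by (auto simp: min_def abs_if)

lemma dfun_lip: "\<bar>dfun d Fs y - dfun d Fs y'\<bar> \<le> 2 * vnorm {..<d} (\<lambda>i. y i - y' i)"
proof (cases "Fs = {}")
  case True then show ?thesis using vnorm_nonneg[of "{..<d}" "\<lambda>i. y i - y' i"] by (simp add: dfun_def)
next
  case False
  have "\<bar>dfun d Fs y - dfun d Fs y'\<bar> \<le> \<bar>infdist (trunc d y) Fs - infdist (trunc d y') Fs\<bar>"
    unfolding dfun_def using False min1_lip by simp
  also have "\<dots> \<le> dist (trunc d y) (trunc d y')" by (rule infdist_triangle_abs)
  also have "\<dots> \<le> 2 * vnorm {..<d} (\<lambda>i. y i - y' i)" by (rule dist_trunc)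
  finally show ?thesis .
qed

lemma dfun_zero: assumes "closed Fs" shows "dfun d Fs y = 0 \<longleftrightarrow> trunc d y \<in> Fs"
proof (cases "Fs = {}")
  case True then show ?thesis by (simp add: dfun_def)
next
  case False
  have "dfun d Fs y = 0 \<longleftrightarrow> infdist (trunc d y) Fs = 0"
    unfolding dfun_def using False infdist_nonneg[of "trunc d y" Fs] by (auto simp: min_def)
  also have "\<dots> \<longleftrightarrow> trunc d y \<in> Fs" using in_closed_iff_infdist_zero[OF assms False] by simp
  finally show ?thesis .
qed

lemma coord_tendsto: "((\<lambda>y::nat\<Rightarrow>real. y i) \<longlongrightarrow> x i) (at x)"
proof -
  have "\<forall>x. ((\<lambda>y::nat\<Rightarrow>real. y i) \<longlongrightarrow> x i) (at x)"
    using continuous_on_product_coordinates[of i] unfolding continuous_on_def by simp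
  then show ?thesis by blast
qed

lemma lip_poly_cont: fixes d :: nat assumes "lip_poly {..<d} f" shows "continuous_on UNIV f"
proof -
  obtain C m where Cm: "\<And>x y. \<bar>f x - f y\<bar> \<le> C * (1 + vnorm {..<d} x ^ m + vnorm {..<d} y ^ m) * vnorm {..<d} (\<lambda>i. x i - y i)"
    using assms unfolding lip_poly_def by blast
  have "(f \<longlongrightarrow> f x) (at x)" for x
  proof -
    have t: "((\<lambda>y. C * (1 + vnorm {..<d} y ^ m + vnorm {..<d} x ^ m) * vnorm {..<d} (\<lambda>i. y i - x i))
       \<longlongrightarrow> C * (1 + vnorm {..<d} x ^ m + vnorm {..<d} x ^ m) * vnorm {..<d} (\<lambda>i. x i - x i)) (at x)"
      unfolding vnorm_def by (intro tendsto_intros) (rule coord_tendsto)+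
    then have t0: "((\<lambda>y. C * (1 + vnorm {..<d} y ^ m + vnorm {..<d} x ^ m) * vnorm {..<d} (\<lambda>i. y i - x i)) \<longlongrightarrow> 0) (at x)"
      by (simp add: vnorm_def)
    have "((\<lambda>y. f y - f x) \<longlongrightarrow> 0) (at x)"
    proof (rule tendsto_0_le[OF t0, of _ 1])
      show "\<forall>\<^sub>F y in at x. norm (f y - f x) \<le> norm (C * (1 + vnorm {..<d} y ^ m + vnorm {..<d} x ^ m) * vnorm {..<d} (\<lambda>i. y i - x i)) * 1"
      proof (rule always_eventually, rule allI)
        fix y
        show "norm (f y - f x) \<le> norm (C * (1 + vnorm {..<d} y ^ m + vnorm {..<d} x ^ m) * vnorm {..<d} (\<lambda>i. y i - x i)) * 1"
          using Cm[of y x] by simp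
      qed
    qed
    then show ?thesis by (simp add: LIM_zero_iff)
  qed
  then show ?thesis unfolding continuous_on_def by simp
qed

lemma lip_poly_trunc: assumes "lip_poly {..<d} f" shows "f (trunc d y) = f y"
proof -
  obtain C m where Cm: "\<And>x y. \<bar>f x - f y\<bar> \<le> C * (1 + vnorm {..<d} x ^ m + vnorm {..<d} y ^ m) * vnorm {..<d} (\<lambda>i. x i - y i)"
    using assms unfolding lip_poly_def by blast
  have "vnorm {..<d} (\<lambda>i. trunc d y i - y i) = 0" unfolding vnorm_def trunc_def by simp
  then show ?thesis using Cm[of "trunc d y" y] by simp
qed

lemma closed_zero_tail: "closed {x::nat\<Rightarrow>real. \<forall>i\<ge>d. x i = 0}"
proof -
  have "{x::nat\<Rightarrow>real. \<forall>i\<ge>d. x i = 0} = (\<Inter>i\<in>{d..}. {x. x i = 0})" by auto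
  also have "closed \<dots>"
    by (intro closed_INT ballI closed_Collect_eq continuous_on_product_coordinates continuous_on_const)
  finally show ?thesis .
qed




context sle_setting
begin

lemma seq_dfun:
  assumes ind: "indep_seq_vec H E d X"
  shows "seq_setting H E Ps F V d X (\<lambda>n. dfun (d n) (G n)) 2"
proof (rule seq_setting.intro[OF sle_setting_axioms])
  show "seq_setting_axioms H E d X (\<lambda>n. dfun (d n) (G n)) 2"
    by (rule seq_setting_axioms.intro) (use ind dfun01 dfun_lip in auto)
qed

lemma part3a:
  assumes ind: "indep_seq_vec H E d X" and cl: "\<And>n. closed_Rd (d n) (Fc n)"
    and Fm: "\<And>n. {\<omega>. trunc (d n) (X n \<omega>) \<notin> Fc n} \<in> F"
    and sm: "summable (\<lambda>n. conj_cap V {\<omega>. trunc (d n) (X n \<omega>) \<notin> Fc n})"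
  shows "\<exists>P\<in>Ps. measure P (limsup (\<lambda>n. {\<omega>. trunc (d n) (X n \<omega>) \<notin> Fc n})) = 0"
proof -
  interpret S: seq_setting H E Ps F V d X "\<lambda>n. dfun (d n) (Fc n)" 2 by (rule seq_dfun[OF ind])
  have Yz: "S.Y n \<omega> = 0 \<longleftrightarrow> trunc (d n) (X n \<omega>) \<in> Fc n" for n \<omega>
    unfolding S.Y_def using dfun_zero cl unfolding closed_Rd_def by blast
  define A where "A n = {\<omega>. trunc (d n) (X n \<omega>) \<in> Fc n}" for n
  have AF: "A n \<in> F" for n
  proof -
    have "A n = - {\<omega>. trunc (d n) (X n \<omega>) \<notin> Fc n}" unfolding A_def by auto
    then show ?thesis using F_compl[OF Fm] by simp
  qed
  define v where "v n = V (A n)" for n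
  define q where "q n = conj_cap V {\<omega>. trunc (d n) (X n \<omega>) \<notin> Fc n}" for n
  have qv: "q n = 1 - v n" for n
  proof -
    have "- {\<omega>. trunc (d n) (X n \<omega>) \<notin> Fc n} = A n" unfolding A_def by auto
    then show ?thesis unfolding q_def v_def conj_cap_def by simp
  qed
  have q0: "0 \<le> q n" for n unfolding qv v_def using V_01(2)[OF AF] by simp
  have vle: "v n \<le> E (\<lambda>\<omega>. cfun k (S.Y n \<omega>))" for n k
    unfolding v_def
  proof (rule V_le_E[OF AF S.cY_H])
    fix \<omega>
    show "indicator (A n) \<omega> \<le> cfun k (S.Y n \<omega>)"
      using Yz[of n \<omega>] cfun_01[of k "S.Y n \<omega>"] by (auto simp: A_def indicator_def)
  qed
  have C0: "(\<Sum>l<L. \<Prod>m\<in>{id l..<id (Suc l)}. (1 - v m)) \<le> suminf q" for L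
  proof -
    have "(\<Sum>l<L. \<Prod>m\<in>{id l..<id (Suc l)}. (1 - v m)) = (\<Sum>l<L. q l)" by (simp add: qv)
    also have "\<dots> \<le> suminf q" using sm unfolding q_def[symmetric] by (intro sum_le_suminf) (auto simp: q0)
    finally show ?thesis .
  qed
  obtain P where P: "P \<in> Ps" and m0: "measure P (limsup (\<lambda>l. {\<omega>. \<forall>m\<in>{id l..<id (Suc l)}. S.Y m \<omega> \<noteq> 0})) = 0"
    using S.block_BC[of id v "suminf q", OF strict_mono_id vle C0] by blast
  have "(\<lambda>l. {\<omega>. \<forall>m\<in>{id l..<id (Suc l)}. S.Y m \<omega> \<noteq> 0}) = (\<lambda>n. {\<omega>. trunc (d n) (X n \<omega>) \<notin> Fc n})"
    using Yz by (auto simp: fun_eq_iff)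
  then show ?thesis using P m0 by auto
qed

lemma dfun_H:
  assumes ind: "indep_seq_vec H E d X"
  shows "(\<lambda>\<omega>. dfun (d n) G (X n \<omega>)) \<in> H"
proof -
  interpret S2: seq_setting H E Ps F V d X "\<lambda>n. dfun (d n) G" 2 by (rule seq_dfun[OF ind])
  show ?thesis using S2.Y_H[of n] unfolding S2.Y_def[abs_def] by simp
qed

lemma nonsum_unb:
  fixes w :: "nat \<Rightarrow> real"
  assumes w0: "\<And>n. 0 \<le> w n" and ns: "\<not> summable w"
  shows "\<exists>b>s. B \<le> (\<Sum>n\<in>{s..<b}. w n)"
proof (rule ccontr)
  assume "\<not> (\<exists>b>s. B \<le> (\<Sum>n\<in>{s..<b}. w n))"
  then have lt: "\<And>b. s < b \<Longrightarrow> (\<Sum>n\<in>{s..<b}. w n) < B" by (meson not_le)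
  have "summable w"
  proof (rule bounded_imp_summable[OF w0])
    fix n
    have "(\<Sum>k\<le>n. w k) = (\<Sum>k\<in>{0..<Suc n}. w k)" by (simp add: atLeast0LessThan lessThan_Suc_atMost)
    also have "\<dots> \<le> (\<Sum>k\<in>{0..<s + Suc n}. w k)" using w0 by (intro sum_mono2) auto
    also have "\<dots> = (\<Sum>k\<in>{0..<s}. w k) + (\<Sum>k\<in>{s..<s + Suc n}. w k)"
      by (rule sum.atLeastLessThan_concat[symmetric]) auto
    also have "\<dots> \<le> (\<Sum>k\<in>{0..<s}. w k) + B" using lt[of "s + Suc n"] by simp
    finally show "(\<Sum>k\<le>n. w k) \<le> (\<Sum>k\<in>{0..<s}. w k) + B" .
  qed
  with ns show False by simp
qed

lemma exp_neg_le_half_pow: "exp (- real l) \<le> (1/2::real) ^ l"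
proof -
  have "2 \<le> exp (1::real)" using exp_ge_add_one_self[of 1] by simp
  then have h: "exp (-1::real) \<le> 1/2" by (simp add: exp_minus field_simps)
  have "exp (- real l) = exp (-1::real) ^ l" using exp_of_nat_mult[of l "-1::real"] by simp
  also have "\<dots> \<le> (1/2) ^ l" by (rule power_mono[OF h]) simp
  finally show ?thesis .
qed

lemma part3b:
  fixes Fc :: "nat \<Rightarrow> nat \<Rightarrow> (nat \<Rightarrow> real) set"
  assumes ind: "indep_seq_vec H E d X" and cl: "\<And>n j. closed_Rd (d n) (Fc n j)"
    and Fm: "\<And>n j. {\<omega>. trunc (d n) (X n \<omega>) \<in> Fc n j} \<in> F"
    and ns: "\<And>j. \<not> summable (\<lambda>n. V {\<omega>. trunc (d n) (X n \<omega>) \<in> Fc n j})"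
  shows "\<exists>P\<in>Ps. measure P (\<Inter>j. limsup (\<lambda>n. {\<omega>. trunc (d n) (X n \<omega>) \<in> Fc n j})) = 1"
proof -
  define A where "A n j = {\<omega>. trunc (d n) (X n \<omega>) \<in> Fc n j}" for n j
  define w where "w j n = V (A n j)" for j n
  have w0: "0 \<le> w j n" and w1: "w j n \<le> 1" for j n
    unfolding w_def A_def using V_01 Fm by auto
  have unb: "\<exists>b>s. B \<le> (\<Sum>n\<in>{s..<b}. w j n)" for j s B
    by (rule nonsum_unb[OF w0]) (use ns in \<open>simp add: w_def A_def\<close>)
  define jj where "jj l = fst (prod_decode l)" for l
  define a where "a = rec_nat 0 (\<lambda>l al. LEAST b. al < b \<and> real l \<le> (\<Sum>n\<in>{al..<b}. w (jj l) n))"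
  have a0: "a 0 = 0" unfolding a_def by simp
  have aS: "a (Suc l) = (LEAST b. a l < b \<and> real l \<le> (\<Sum>n\<in>{a l..<b}. w (jj l) n))" for l
    unfolding a_def by simp
  have aP: "a l < a (Suc l) \<and> real l \<le> (\<Sum>n\<in>{a l..<a (Suc l)}. w (jj l) n)" for l
    unfolding aS[of l] by (rule LeastI_ex) (use unb in blast)
  have amono: "strict_mono a" using aP by (simp add: strict_mono_Suc_iff)
  define blk where "blk n = (LEAST l. n < a (Suc l))" for n
  have blk: "blk m = l" if "m \<in> {a l..<a (Suc l)}" for m l
  proof -
    have m1: "m < a (Suc l)" "a l \<le> m" using that by auto
    have le: "blk m \<le> l" unfolding blk_def by (rule Least_le) (rule m1(1))
    have lt: "m < a (Suc (blk m))" unfolding blk_def by (rule LeastI[of _ l]) (rule m1(1))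
    show ?thesis
    proof (rule ccontr)
      assume "blk m \<noteq> l"
      with le have "Suc (blk m) \<le> l" by simp
      then have "a (Suc (blk m)) \<le> a l" using amono by (simp add: strict_mono_less_eq)
      with lt m1(2) show False by simp
    qed
  qed
  define J where "J n = jj (blk n)" for n
  interpret S: seq_setting H E Ps F V d X "\<lambda>n. dfun (d n) (Fc n (J n))" 2 by (rule seq_dfun[OF ind])
  have Yz: "S.Y n \<omega> = 0 \<longleftrightarrow> \<omega> \<in> A n (J n)" for n \<omega>
    unfolding S.Y_def A_def using dfun_zero cl unfolding closed_Rd_def by blast
  define v where "v n = w (J n) n" for n
  have vle: "v n \<le> E (\<lambda>\<omega>. cfun k (S.Y n \<omega>))" for n k
    unfolding v_def w_def
  proof (rule V_le_E[OF _ S.cY_H])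
    show "A n (J n) \<in> F" unfolding A_def by (rule Fm)
    fix \<omega>
    show "indicator (A n (J n)) \<omega> \<le> cfun k (S.Y n \<omega>)"
      using Yz[of n \<omega>] cfun_01[of k "S.Y n \<omega>"] by (auto simp: indicator_def)
  qed
  have blockb: "(\<Prod>m\<in>{a l..<a (Suc l)}. (1 - v m)) \<le> (1/2) ^ l" for l
  proof -
    have vm: "v m = w (jj l) m" if "m \<in> {a l..<a (Suc l)}" for m
      unfolding v_def J_def using blk[OF that] by simp
    have "(\<Prod>m\<in>{a l..<a (Suc l)}. (1 - v m)) \<le> (\<Prod>m\<in>{a l..<a (Suc l)}. exp (- v m))"
    proof (rule prod_mono)
      fix m assume "m \<in> {a l..<a (Suc l)}"
      show "0 \<le> 1 - v m \<and> 1 - v m \<le> exp (- v m)"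
        using w1 exp_ge_add_one_self[of "- v m"] unfolding v_def by auto
    qed
    also have "\<dots> = exp (- (\<Sum>m\<in>{a l..<a (Suc l)}. v m))"
      by (simp add: exp_sum[symmetric] sum_negf)
    also have "\<dots> \<le> exp (- real l)"
    proof -
      have "(\<Sum>m\<in>{a l..<a (Suc l)}. v m) = (\<Sum>m\<in>{a l..<a (Suc l)}. w (jj l) m)"
        using vm by (intro sum.cong) auto
      then show ?thesis using aP[of l] by simp
    qed
    also have "\<dots> \<le> (1/2) ^ l" by (rule exp_neg_le_half_pow)
    finally show ?thesis .
  qed
  have C0: "(\<Sum>l<L. \<Prod>m\<in>{a l..<a (Suc l)}. (1 - v m)) \<le> 2" for L
  proof -
    have "(\<Sum>l<L. \<Prod>m\<in>{a l..<a (Suc l)}. (1 - v m)) \<le> (\<Sum>l<L. (1/2::real) ^ l)"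
      by (intro sum_mono blockb)
    also have "\<dots> \<le> (\<Sum>l. (1/2::real) ^ l)"
      by (intro sum_le_suminf summable_geometric) auto
    also have "\<dots> = 2" using suminf_geometric[of "1/2::real"] by simp
    finally show ?thesis .
  qed
  obtain P where P: "P \<in> Ps" and m0: "measure P (limsup (\<lambda>l. {\<omega>. \<forall>m\<in>{a l..<a (Suc l)}. S.Y m \<omega> \<noteq> 0})) = 0"
    using S.block_BC[OF amono vle C0] by blast
  define Cs where "Cs l = {\<omega>. \<forall>m\<in>{a l..<a (Suc l)}. S.Y m \<omega> \<noteq> 0}" for l
  interpret Pp: prob_space P using Ps_prop[OF P] by simp
  have spP: "space P = UNIV" using Ps_prop[OF P] by simp
  have Ymeas[measurable]: "S.Y m \<in> borel_measurable P" for m by (rule S.Y_meas[OF P])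
  have Csets: "Cs l \<in> sets P" for l
  proof -
    have "Cs l = {\<omega> \<in> space P. \<forall>m\<in>{a l..<a (Suc l)}. S.Y m \<omega> \<noteq> 0}" unfolding Cs_def spP by simp
    also have "\<dots> \<in> sets P" by measurable
    finally show ?thesis .
  qed
  have LC: "limsup Cs \<in> sets P" by (rule measurable_limsup[OF Csets])
  have Asets: "A n j \<in> sets P" for n j
  proof -
    have m: "(\<lambda>\<omega>. dfun (d n) (Fc n j) (X n \<omega>)) \<in> borel_measurable P"
      by (rule H_meas[OF dfun_H[OF ind] P])
    have "A n j = (\<lambda>\<omega>. dfun (d n) (Fc n j) (X n \<omega>)) -` {0} \<inter> space P"
      unfolding A_def spP using dfun_zero cl unfolding closed_Rd_def by auto
    also have "\<dots> \<in> sets P" by (rule measurable_sets[OF m]) simp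
    finally show ?thesis .
  qed
  define S where "S = (\<Inter>j. limsup (\<lambda>n. A n j))"
  have Ssets: "S \<in> sets P" unfolding S_def
  proof (rule sets.countable_INT'')
    fix j show "limsup (\<lambda>n. A n j) \<in> sets P" by (rule measurable_limsup) (rule Asets)
  qed (auto simp: spP[symmetric])
  have sub: "space P - limsup Cs \<subseteq> S"
  proof
    fix \<omega> assume "\<omega> \<in> space P - limsup Cs"
    then obtain L where L: "\<And>l. L \<le> l \<Longrightarrow> \<omega> \<notin> Cs l"
      unfolding limsup_INF_SUP by auto
    show "\<omega> \<in> S" unfolding S_def limsup_INF_SUP
    proof (intro INT_I)
      fix j N :: nat
      define l where "l = prod_encode (j, max L N)"
      have lge: "max L N \<le> l" unfolding l_def by (rule le_prod_encode_2)
      have jl: "jj l = j" unfolding jj_def l_def by simp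
      from L[of l] lge obtain m where m: "m \<in> {a l..<a (Suc l)}" "S.Y m \<omega> = 0"
        unfolding Cs_def by auto
      have "\<omega> \<in> A m (J m)" using Yz m(2) by simp
      moreover have "J m = j" unfolding J_def using blk[OF m(1)] jl by simp
      moreover have "N \<le> m" using m(1) seq_suble[OF amono, of l] lge by auto
      ultimately show "\<omega> \<in> (\<Union>n\<in>{N..}. A n j)" by auto
    qed
  qed
  have "measure P (space P - limsup Cs) = 1"
    using Pp.prob_compl[OF LC] m0 unfolding Cs_def by simp
  moreover have "measure P (space P - limsup Cs) \<le> measure P S"
    by (rule Pp.finite_measure_mono[OF sub Ssets])
  moreover have "measure P S \<le> 1" by (rule Pp.prob_le_1)
  ultimately have "measure P S = 1" by linarith
  then show ?thesis using P unfolding S_def A_def by blast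
qed

lemma part1:
  fixes X :: "nat \<Rightarrow> 'a \<Rightarrow> real"
  assumes ind: "indep_seq_rv H E X" and Fm: "\<And>n. {\<omega>. X n \<omega> < 1} \<in> F"
    and sm: "summable (\<lambda>n. conj_cap V {\<omega>. X n \<omega> < 1})"
  shows "\<exists>P\<in>Ps. measure P (limsup (\<lambda>n. {\<omega>. X n \<omega> < 1})) = 0"
proof -
  define Fc0 where "Fc0 = {x::nat\<Rightarrow>real. 1 \<le> x 0 \<and> (\<forall>i\<ge>1. x i = 0)}"
  have ind': "indep_seq_vec H E (\<lambda>_. 1) (\<lambda>n \<omega> _. X n \<omega>)"
    using ind unfolding indep_seq_rv_def .
  have cl: "closed_Rd 1 Fc0"
    unfolding closed_Rd_def
  proof
    show "Fc0 \<subseteq> {x. \<forall>i\<ge>1. x i = 0}" unfolding Fc0_def by auto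
    have "Fc0 = {x::nat\<Rightarrow>real. 1 \<le> x 0} \<inter> {x. \<forall>i\<ge>1. x i = 0}" unfolding Fc0_def by auto
    also have "closed \<dots>"
      by (intro closed_Int closed_zero_tail closed_Collect_le continuous_on_const continuous_on_product_coordinates)
    finally show "closed Fc0" .
  qed
  have eq: "{\<omega>. trunc 1 (X' n \<omega>) \<notin> Fc0} = {\<omega>. X n \<omega> < 1}" if "X' = (\<lambda>n \<omega> _. X n \<omega>)" for n X'
    unfolding that Fc0_def trunc_def by auto
  have "\<exists>P\<in>Ps. measure P (limsup (\<lambda>n. {\<omega>. trunc ((\<lambda>_. 1) n) ((\<lambda>n \<omega> _. X n \<omega>) n \<omega>) \<notin> (\<lambda>_. Fc0) n})) = 0"
    by (rule part3a[OF ind']) (use cl Fm sm eq in auto)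
  then show ?thesis using eq by simp
qed

lemma part2:
  fixes d :: "nat \<Rightarrow> nat" and X :: "nat \<Rightarrow> 'a \<Rightarrow> nat \<Rightarrow> real" and f :: "nat \<Rightarrow> nat \<Rightarrow> (nat \<Rightarrow> real) \<Rightarrow> real"
  assumes ind: "indep_seq_vec H E d X" and lp: "\<And>n j. lip_poly {..<d n} (f n j)"
    and Fm: "\<And>n j. {\<omega>. f n j (X n \<omega>) \<ge> 1} \<in> F"
    and ns: "\<And>j. \<not> summable (\<lambda>n. V {\<omega>. f n j (X n \<omega>) \<ge> 1})"
  shows "\<exists>P\<in>Ps. measure P (\<Inter>j. limsup (\<lambda>n. {\<omega>. f n j (X n \<omega>) \<ge> 1})) = 1"
proof -
  define Fc where "Fc n j = {x. (\<forall>i\<ge>d n. x i = 0) \<and> 1 \<le> f n j x}" for n j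
  have cl: "closed_Rd (d n) (Fc n j)" for n j
    unfolding closed_Rd_def
  proof
    show "Fc n j \<subseteq> {x. \<forall>i\<ge>d n. x i = 0}" unfolding Fc_def by auto
    have "Fc n j = {x. \<forall>i\<ge>d n. x i = 0} \<inter> {x. 1 \<le> f n j x}" unfolding Fc_def by auto
    also have "closed \<dots>"
      by (intro closed_Int closed_zero_tail closed_Collect_le continuous_on_const lip_poly_cont[OF lp])
    finally show "closed (Fc n j)" .
  qed
  have eq: "{\<omega>. trunc (d n) (X n \<omega>) \<in> Fc n j} = {\<omega>. f n j (X n \<omega>) \<ge> 1}" for n j
    unfolding Fc_def using lip_poly_trunc[OF lp] by (auto simp: trunc_def)
  have "\<exists>P\<in>Ps. measure P (\<Inter>j. limsup (\<lambda>n. {\<omega>. trunc (d n) (X n \<omega>) \<in> Fc n j})) = 1"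
    by (rule part3b[OF ind cl]) (use Fm ns eq in auto)
  then show ?thesis unfolding eq .
qed

end

theorem lemma4p4:
  fixes H :: "('a \<Rightarrow> real) set" and E :: "('a \<Rightarrow> real) \<Rightarrow> real"
    and \<P> :: "'a measure set" and F :: "'a set set" and V :: "'a set \<Rightarrow> real"
  assumes SLE: "sublinear_expectation_space H E"
    and CC: "condition_CC H E \<P>"
    and F: "sigma_algebra UNIV F"
    and V: "subadd_capacity F V"
    and VE: "capacity_between H E F V"
  shows
   "(\<forall>X::nat \<Rightarrow> 'a \<Rightarrow> real.
       indep_seq_rv H E X \<longrightarrow> (\<forall>n. {\<omega>. X n \<omega> < 1} \<in> F) \<longrightarrow>
       summable (\<lambda>n. conj_cap V {\<omega>. X n \<omega> < 1}) \<longrightarrow>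
       (\<exists>P\<in>\<P>. measure P (limsup (\<lambda>n. {\<omega>. X n \<omega> < 1})) = 0))
    \<and>
    (\<forall>(d::nat \<Rightarrow> nat) (X::nat \<Rightarrow> 'a \<Rightarrow> nat \<Rightarrow> real) (f::nat \<Rightarrow> nat \<Rightarrow> (nat \<Rightarrow> real) \<Rightarrow> real).
       indep_seq_vec H E d X \<longrightarrow> (\<forall>n j. lip_poly {..<d n} (f n j)) \<longrightarrow>
       (\<forall>n j. {\<omega>. f n j (X n \<omega>) \<ge> 1} \<in> F) \<longrightarrow>
       (\<forall>j. \<not> summable (\<lambda>n. V {\<omega>. f n j (X n \<omega>) \<ge> 1})) \<longrightarrow>
       (\<exists>P\<in>\<P>. measure P (\<Inter>j. limsup (\<lambda>n. {\<omega>. f n j (X n \<omega>) \<ge> 1})) = 1))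
    \<and>
    (\<forall>(d::nat \<Rightarrow> nat) (X::nat \<Rightarrow> 'a \<Rightarrow> nat \<Rightarrow> real) (Fc::nat \<Rightarrow> (nat \<Rightarrow> real) set).
       indep_seq_vec H E d X \<longrightarrow> (\<forall>n. closed_Rd (d n) (Fc n)) \<longrightarrow>
       (\<forall>n. {\<omega>. trunc (d n) (X n \<omega>) \<notin> Fc n} \<in> F) \<longrightarrow>
       summable (\<lambda>n. conj_cap V {\<omega>. trunc (d n) (X n \<omega>) \<notin> Fc n}) \<longrightarrow>
       (\<exists>P\<in>\<P>. measure P (limsup (\<lambda>n. {\<omega>. trunc (d n) (X n \<omega>) \<notin> Fc n})) = 0))
    \<and>
    (\<forall>(d::nat \<Rightarrow> nat) (X::nat \<Rightarrow> 'a \<Rightarrow> nat \<Rightarrow> real) (Fc::nat \<Rightarrow> nat \<Rightarrow> (nat \<Rightarrow> real) set).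
       indep_seq_vec H E d X \<longrightarrow> (\<forall>n j. closed_Rd (d n) (Fc n j)) \<longrightarrow>
       (\<forall>n j. {\<omega>. trunc (d n) (X n \<omega>) \<in> Fc n j} \<in> F) \<longrightarrow>
       (\<forall>j. \<not> summable (\<lambda>n. V {\<omega>. trunc (d n) (X n \<omega>) \<in> Fc n j})) \<longrightarrow>
       (\<exists>P\<in>\<P>. measure P (\<Inter>j. limsup (\<lambda>n. {\<omega>. trunc (d n) (X n \<omega>) \<in> Fc n j})) = 1))"
proof -
  interpret sle_setting H E \<P> F V by (rule sle_setting.intro) (fact SLE CC F V VE)+
  show ?thesis
  proof (intro conjI allI impI)
    fix X :: "nat \<Rightarrow> 'a \<Rightarrow> real"
    assume "indep_seq_rv H E X" "\<forall>n. {\<omega>. X n \<omega> < 1} \<in> F" "summable (\<lambda>n. conj_cap V {\<omega>. X n \<omega> < 1})"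
    then show "\<exists>P\<in>\<P>. measure P (limsup (\<lambda>n. {\<omega>. X n \<omega> < 1})) = 0" by (intro part1) auto
  next
    fix d :: "nat \<Rightarrow> nat" and X :: "nat \<Rightarrow> 'a \<Rightarrow> nat \<Rightarrow> real" and f :: "nat \<Rightarrow> nat \<Rightarrow> (nat \<Rightarrow> real) \<Rightarrow> real"
    assume "indep_seq_vec H E d X" "\<forall>n j. lip_poly {..<d n} (f n j)" "\<forall>n j. {\<omega>. f n j (X n \<omega>) \<ge> 1} \<in> F"
      "\<forall>j. \<not> summable (\<lambda>n. V {\<omega>. f n j (X n \<omega>) \<ge> 1})"
    then show "\<exists>P\<in>\<P>. measure P (\<Inter>j. limsup (\<lambda>n. {\<omega>. f n j (X n \<omega>) \<ge> 1})) = 1" by (intro part2) auto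
  next
    fix d :: "nat \<Rightarrow> nat" and X :: "nat \<Rightarrow> 'a \<Rightarrow> nat \<Rightarrow> real" and Fc :: "nat \<Rightarrow> (nat \<Rightarrow> real) set"
    assume "indep_seq_vec H E d X" "\<forall>n. closed_Rd (d n) (Fc n)" "\<forall>n. {\<omega>. trunc (d n) (X n \<omega>) \<notin> Fc n} \<in> F"
      "summable (\<lambda>n. conj_cap V {\<omega>. trunc (d n) (X n \<omega>) \<notin> Fc n})"
    then show "\<exists>P\<in>\<P>. measure P (limsup (\<lambda>n. {\<omega>. trunc (d n) (X n \<omega>) \<notin> Fc n})) = 0" by (intro part3a) auto
  next
    fix d :: "nat \<Rightarrow> nat" and X :: "nat \<Rightarrow> 'a \<Rightarrow> nat \<Rightarrow> real" and Fc :: "nat \<Rightarrow> nat \<Rightarrow> (nat \<Rightarrow> real) set"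
    assume "indep_seq_vec H E d X" "\<forall>n j. closed_Rd (d n) (Fc n j)" "\<forall>n j. {\<omega>. trunc (d n) (X n \<omega>) \<in> Fc n j} \<in> F"
      "\<forall>j. \<not> summable (\<lambda>n. V {\<omega>. trunc (d n) (X n \<omega>) \<in> Fc n j})"
    then show "\<exists>P\<in>\<P>. measure P (\<Inter>j. limsup (\<lambda>n. {\<omega>. trunc (d n) (X n \<omega>) \<in> Fc n j})) = 1" by (intro part3b) auto
  qed
qed


end
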